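(* Under the setting of the context, the process $M_n=\sum_{k=1}^nY_k$ is a square integrable martingale with respect to $(\mathcal F_n)$, whose bracket is $\langle M\rangle_n=\sum_{k=1}^n a^{(m)}(\xi_{k-1},S_{k-1}/m)$, where $$a^{(m)}(i,y)=\bigl[\alpha-(v+b^{(m)})(v+b^{(m)})^t\bigr](i,y)+\sum_{u\in\mathcal V}p(i,y,u)\bigl[P(vv^t)+u(Pv)^t+(Pv)u^t\bigr](i,y+u/m).$$ Moreover there exists a finite constant $C$, depending only on $E$, $P$ and $p$, such that $|a^{(m)}(i,y)|\le C$ for all $m\ge1$, $i\in E$, $y\in\mathbb R^d$.
   Context: Let $d\ge1$, $(e_1,\dots,e_d)$ the canonical basis, $\mathcal V=\{\pm e_1,\dots,\pm e_d\}$. Let $E$ be a finite set and $P$ an irreducible and aperiodic stochastic matrix on $E$ with unique invariant probability $\mu$. For $k\in E$, $y\in\mathbb R^d$, $p(k,y,\cdot)$ is a probability on $\mathcal V$, with $y\mapsto p(k,y,u)$ twice continuously differentiable with bounded derivatives. Let $g(k,y)=\sum_u u\,p(k,y,u)$, assumed to satisfy $\sum_k\mu(k)g(k,y)=0$ for all $y$; $\alpha(i,y)=\sum_u uu^tp(i,y,u)$; $v(i,y)=\sum_{n\ge0}\sum_{j}P^n(i,j)g(j,y)$. For a function $f$ on $E\times\mathbb R^d$ (vector or matrix valued), $(Pf)(i,y)=\sum_jP(i,j)f(j,y)$. Let $b^{(m)}(i,y)=\sum_u p(i,y,u)[(v-g)(i,y+u/m)-(v-g)(i,y)]$. For an integer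 $m\ge1$: $S_0=0$, $S_{n+1}=S_n+J_{n+1}$, $J_n\in\mathcal V$, and with $\mathcal F_n=\sigma(\xi_0,\dots,\xi_n,J_0,\dots,J_n)$, $\mathbb P(\xi_{n+1}=k,J_{n+1}=u\mid\mathcal F_n)=P(\xi_n,k)p(\xi_n,S_n/m,u)$. For $n\ge1$, $Y_n=J_n+v(\xi_n,S_n/m)-\mathbb E[J_n+v(\xi_n,S_n/m)\mid\mathcal F_{n-1}]$. *)

theory Defs
  imports "HOL-Probability.Probability"
begin

fun mpow :: "('e::finite \<Rightarrow> 'e \<Rightarrow> real) \<Rightarrow> nat \<Rightarrow> 'e \<Rightarrow> 'e \<Rightarrow> real" where
  "mpow P 0 = (\<lambda>i j. if i = j then 1 else 0)"
| "mpow P (Suc n) = (\<lambda>i j. \<Sum>k\<in>UNIV. mpow P n i k * P k j)"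

definition stochastic_matrix :: "('e::finite \<Rightarrow> 'e \<Rightarrow> real) \<Rightarrow> bool" where
  "stochastic_matrix P \<longleftrightarrow> (\<forall>i j. 0 \<le> P i j) \<and> (\<forall>i. (\<Sum>j\<in>UNIV. P i j) = 1)"

definition irreducible_matrix :: "('e::finite \<Rightarrow> 'e \<Rightarrow> real) \<Rightarrow> bool" where
  "irreducible_matrix P \<longleftrightarrow> (\<forall>i j. \<exists>n. mpow P n i j > 0)"

definition aperiodic_matrix :: "('e::finite \<Rightarrow> 'e \<Rightarrow> real) \<Rightarrow> bool" where
  "aperiodic_matrix P \<longleftrightarrow> (\<forall>i. Gcd {n::nat. 1 \<le> n \<and> mpow P n i i > 0} = 1)"

definition invariant_probability :: "('e::finite \<Rightarrow> 'e \<Rightarrow> real) \<Rightarrow> ('e \<Rightarrow> real) \<Rightarrow> bool" where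
  "invariant_probability P \<mu> \<longleftrightarrow> (\<forall>i. 0 \<le> \<mu> i) \<and> (\<Sum>i\<in>UNIV. \<mu> i) = 1
      \<and> (\<forall>j. (\<Sum>i\<in>UNIV. \<mu> i * P i j) = \<mu> j)"

definition Pop :: "('e::finite \<Rightarrow> 'e \<Rightarrow> real) \<Rightarrow> ('e \<Rightarrow> 'y \<Rightarrow> 'b::real_vector) \<Rightarrow> 'e \<Rightarrow> 'y \<Rightarrow> 'b" where
  "Pop P f i y = (\<Sum>j\<in>UNIV. P i j *\<^sub>R f j y)"

definition Vdirs :: "(real^'d::finite) set" where
  "Vdirs = {axis k 1 | k. True} \<union> {axis k (-1) | k. True}"

definition outer :: "real^'d::finite \<Rightarrow> real^'d \<Rightarrow> real^'d^'d" where
  "outer u w = (\<chi> i j. u $ i * w $ j)"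

definition gfun :: "('e \<Rightarrow> real^'d::finite \<Rightarrow> real^'d \<Rightarrow> real) \<Rightarrow> 'e \<Rightarrow> real^'d \<Rightarrow> real^'d" where
  "gfun p k y = (\<Sum>u\<in>Vdirs. p k y u *\<^sub>R u)"

definition alphafun :: "('e \<Rightarrow> real^'d::finite \<Rightarrow> real^'d \<Rightarrow> real) \<Rightarrow> 'e \<Rightarrow> real^'d \<Rightarrow> real^'d^'d" where
  "alphafun p i y = (\<Sum>u\<in>Vdirs. p i y u *\<^sub>R outer u u)"

definition vfun :: "('e::finite \<Rightarrow> 'e \<Rightarrow> real) \<Rightarrow> ('e \<Rightarrow> real^'d::finite \<Rightarrow> real^'d \<Rightarrow> real)
    \<Rightarrow> 'e \<Rightarrow> real^'d \<Rightarrow> real^'d" where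
  "vfun P p i y = (\<Sum>n. \<Sum>j\<in>UNIV. mpow P n i j *\<^sub>R gfun p j y)"

definition bfun :: "('e::finite \<Rightarrow> 'e \<Rightarrow> real) \<Rightarrow> ('e \<Rightarrow> real^'d::finite \<Rightarrow> real^'d \<Rightarrow> real)
    \<Rightarrow> nat \<Rightarrow> 'e \<Rightarrow> real^'d \<Rightarrow> real^'d" where
  "bfun P p m i y = (\<Sum>u\<in>Vdirs. p i y u *\<^sub>R
      ((vfun P p i (y + inverse (real m) *\<^sub>R u) - gfun p i (y + inverse (real m) *\<^sub>R u))
       - (vfun P p i y - gfun p i y)))"

definition afun :: "('e::finite \<Rightarrow> 'e \<Rightarrow> real) \<Rightarrow> ('e \<Rightarrow> real^'d::finite \<Rightarrow> real^'d \<Rightarrow> real)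
    \<Rightarrow> nat \<Rightarrow> 'e \<Rightarrow> real^'d \<Rightarrow> real^'d^'d" where
  "afun P p m i y =
     alphafun p i y - outer (vfun P p i y + bfun P p m i y) (vfun P p i y + bfun P p m i y)
     + (\<Sum>u\<in>Vdirs. p i y u *\<^sub>R
          (Pop P (\<lambda>j z. outer (vfun P p j z) (vfun P p j z)) i (y + inverse (real m) *\<^sub>R u)
           + outer u (Pop P (vfun P p) i (y + inverse (real m) *\<^sub>R u))
           + outer (Pop P (vfun P p) i (y + inverse (real m) *\<^sub>R u)) u))"

definition Sproc :: "(nat \<Rightarrow> 'a \<Rightarrow> real^'d::finite) \<Rightarrow> nat \<Rightarrow> 'a \<Rightarrow> real^'d" where
  "Sproc J n \<omega> = (\<Sum>k\<in>{1..n}. J k \<omega>)"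

definition filt :: "'a measure \<Rightarrow> (nat \<Rightarrow> 'a \<Rightarrow> 'e) \<Rightarrow> (nat \<Rightarrow> 'a \<Rightarrow> real^'d::finite) \<Rightarrow> nat \<Rightarrow> 'a measure" where
  "filt M \<xi> J n = sigma (space M)
     (\<Union>i\<in>{..n}. {\<xi> i -` B \<inter> space M | B. True} \<union> {J i -` B \<inter> space M | B. B \<in> sets borel})"

text \<open>The Markov random walk with parameter m: P(xi_{n+1}=k, J_{n+1}=u | F_n)
  = P(xi_n,k) p(xi_n, S_n/m, u), written via the defining property of
  conditional probability (integrals over events of F_n).\<close>
definition mrw :: "('e::finite \<Rightarrow> 'e \<Rightarrow> real) \<Rightarrow> ('e \<Rightarrow> real^'d::finite \<Rightarrow> real^'d \<Rightarrow> real) \<Rightarrow> nat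
    \<Rightarrow> 'a measure \<Rightarrow> (nat \<Rightarrow> 'a \<Rightarrow> 'e) \<Rightarrow> (nat \<Rightarrow> 'a \<Rightarrow> real^'d) \<Rightarrow> bool" where
  "mrw P p m M \<xi> J \<longleftrightarrow> prob_space M
     \<and> (\<forall>n. \<xi> n \<in> measurable M (count_space UNIV))
     \<and> (\<forall>n. J n \<in> borel_measurable M)
     \<and> (\<forall>n. \<forall>\<omega>\<in>space M. J n \<omega> \<in> Vdirs)
     \<and> (\<forall>n k u A. u \<in> Vdirs \<longrightarrow> A \<in> sets (filt M \<xi> J n) \<longrightarrow>
          measure M (A \<inter> {\<omega>\<in>space M. \<xi> (Suc n) \<omega> = k \<and> J (Suc n) \<omega> = u})
          = (\<integral>\<omega>. indicator A \<omega> *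
               (P (\<xi> n \<omega>) k * p (\<xi> n \<omega>) (inverse (real m) *\<^sub>R Sproc J n \<omega>) u) \<partial>M))"

definition Yproc :: "('e::finite \<Rightarrow> 'e \<Rightarrow> real) \<Rightarrow> ('e \<Rightarrow> real^'d::finite \<Rightarrow> real^'d \<Rightarrow> real) \<Rightarrow> nat
    \<Rightarrow> 'a measure \<Rightarrow> (nat \<Rightarrow> 'a \<Rightarrow> 'e) \<Rightarrow> (nat \<Rightarrow> 'a \<Rightarrow> real^'d) \<Rightarrow> nat \<Rightarrow> 'a \<Rightarrow> real^'d" where
  "Yproc P p m M \<xi> J n \<omega> =
     (let Z = (\<lambda>\<omega>. J n \<omega> + vfun P p (\<xi> n \<omega>) (inverse (real m) *\<^sub>R Sproc J n \<omega>))
      in (\<chi> i. Z \<omega> $ i - real_cond_exp M (filt M \<xi> J (n - 1)) (\<lambda>\<omega>. Z \<omega> $ i) \<omega>))"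

definition Mproc :: "('e::finite \<Rightarrow> 'e \<Rightarrow> real) \<Rightarrow> ('e \<Rightarrow> real^'d::finite \<Rightarrow> real^'d \<Rightarrow> real) \<Rightarrow> nat
    \<Rightarrow> 'a measure \<Rightarrow> (nat \<Rightarrow> 'a \<Rightarrow> 'e) \<Rightarrow> (nat \<Rightarrow> 'a \<Rightarrow> real^'d) \<Rightarrow> nat \<Rightarrow> 'a \<Rightarrow> real^'d" where
  "Mproc P p m M \<xi> J n \<omega> = (\<Sum>k\<in>{1..n}. Yproc P p m M \<xi> J k \<omega>)"

definition real_martingale :: "'a measure \<Rightarrow> (nat \<Rightarrow> 'a measure) \<Rightarrow> (nat \<Rightarrow> 'a \<Rightarrow> real) \<Rightarrow> bool" where
  "real_martingale M F X \<longleftrightarrow>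
     (\<forall>n. X n \<in> borel_measurable (F n)) \<and> (\<forall>n. integrable M (X n))
     \<and> (\<forall>n. AE \<omega> in M. real_cond_exp M (F n) (X (Suc n)) \<omega> = X n \<omega>)"

definition vec_martingale :: "'a measure \<Rightarrow> (nat \<Rightarrow> 'a measure) \<Rightarrow> (nat \<Rightarrow> 'a \<Rightarrow> real^'d::finite) \<Rightarrow> bool" where
  "vec_martingale M F X \<longleftrightarrow> (\<forall>i. real_martingale M F (\<lambda>n \<omega>. X n \<omega> $ i))"

definition sq_integrable_martingale :: "'a measure \<Rightarrow> (nat \<Rightarrow> 'a measure) \<Rightarrow> (nat \<Rightarrow> 'a \<Rightarrow> real^'d::finite) \<Rightarrow> bool" where
  "sq_integrable_martingale M F X \<longleftrightarrow> vec_martingale M F X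
     \<and> (\<forall>n. integrable M (\<lambda>\<omega>. (norm (X n \<omega>))\<^sup>2))"

text \<open>A is the bracket (predictable quadratic variation) of the martingale X:
  A_0 = 0, A is predictable (A_{n+1} is F_n-measurable), and X X^t - A is a
  (matrix valued) martingale.\<close>
definition is_bracket :: "'a measure \<Rightarrow> (nat \<Rightarrow> 'a measure) \<Rightarrow> (nat \<Rightarrow> 'a \<Rightarrow> real^'d::finite)
    \<Rightarrow> (nat \<Rightarrow> 'a \<Rightarrow> real^'d^'d) \<Rightarrow> bool" where
  "is_bracket M F X A \<longleftrightarrow>
     (\<forall>\<omega>\<in>space M. A 0 \<omega> = 0)
     \<and> (\<forall>n i j. (\<lambda>\<omega>. A (Suc n) \<omega> $ i $ j) \<in> borel_measurable (F n))
     \<and> (\<forall>i j. real_martingale M F (\<lambda>n \<omega>. (outer (X n \<omega>) (X n \<omega>) - A n \<omega>) $ i $ j))"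

end

theory Submission
  imports Defs
begin

lemma semigroup_gcd1:
  fixes S :: "nat set"
  assumes add: "\<And>a b. a \<in> S \<Longrightarrow> b \<in> S \<Longrightarrow> a + b \<in> S"
    and g: "Gcd S = 1"
  shows "\<exists>N. \<forall>n\<ge>N. n \<in> S"
proof -
  define S0 where "S0 = insert 0 S"
  have add0: "a \<in> S0 \<Longrightarrow> b \<in> S0 \<Longrightarrow> a + b \<in> S0" for a b
    using add unfolding S0_def by auto
  define D where "D = {int a - int b | a b. a \<in> S0 \<and> b \<in> S0}"
  have Dadd: "x \<in> D \<Longrightarrow> y \<in> D \<Longrightarrow> x + y \<in> D" for x y
  proof -
    assume "x \<in> D" "y \<in> D"
    then obtain a b c e where "a \<in> S0" "b \<in> S0" "c \<in> S0" "e \<in> S0" "x = int a - int b" "y = int c - int e"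
      unfolding D_def by blast
    then show ?thesis unfolding D_def
      by (intro CollectI exI[of _ "a+c"] exI[of _ "b+e"]) (auto intro: add0)
  qed
  have Dneg: "x \<in> D \<Longrightarrow> - x \<in> D" for x
    unfolding D_def by force
  have D0: "0 \<in> D" unfolding D_def S0_def by force
  have SD: "s \<in> S \<Longrightarrow> int s \<in> D" for s
    unfolding D_def S0_def by force
  have Dmult: "x \<in> D \<Longrightarrow> int k * x \<in> D" for x k
    by (induction k) (auto simp: D0 distrib_right intro: Dadd)
  have Dmult': "x \<in> D \<Longrightarrow> q * x \<in> D" for x q
  proof -
    assume x: "x \<in> D"
    show ?thesis
    proof (cases "q \<ge> 0")
      case True then show ?thesis using Dmult[OF x, of "nat q"] by simp
    next
      case False then show ?thesis using Dneg[OF Dmult[OF x, of "nat (-q)"]] by simp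
    qed
  qed
  have "S \<noteq> {}" using g by auto
  have "\<exists>s\<in>S. s > 0"
  proof (rule ccontr)
    assume "\<not> ?thesis" then have "S \<subseteq> {0}" by auto
    then have "Gcd S = 0" by (metis Gcd_0_iff)
    with g show False by simp
  qed
  then obtain s0 where s0: "s0 \<in> S" "s0 > 0" by blast
  define d where "d = (LEAST k::nat. k > 0 \<and> int k \<in> D)"
  have dex: "s0 > 0 \<and> int s0 \<in> D" using s0 SD by auto
  have dprop: "d > 0 \<and> int d \<in> D" unfolding d_def by (rule LeastI[of _ s0], rule dex)
  have dmin: "k > 0 \<Longrightarrow> int k \<in> D \<Longrightarrow> d \<le> k" for k unfolding d_def by (rule Least_le) simp
  have ddvd: "int d dvd x" if x: "x \<in> D" for x
  proof -
    have "x mod int d = x - (x div int d) * int d" by (simp add: minus_div_mult_eq_mod)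
    also have "\<dots> \<in> D" using Dadd[OF x Dmult'[OF dprop[THEN conjunct2], of "- (x div int d)"]] by simp
    finally have m: "x mod int d \<in> D" .
    have "0 \<le> x mod int d" "x mod int d < int d" using dprop by auto
    show ?thesis
    proof (rule ccontr)
      assume "\<not> ?thesis"
      then have "x mod int d > 0" using \<open>0 \<le> x mod int d\<close> by (simp add: dvd_eq_mod_eq_0 order_le_less)
      then have "d \<le> nat (x mod int d)" using dmin[of "nat (x mod int d)"] m by simp
      then have "int d \<le> x mod int d" using \<open>x mod int d > 0\<close> by linarith
      with \<open>x mod int d < int d\<close> show False by linarith
    qed
  qed
  have "d dvd s" if "s \<in> S" for s using ddvd[OF SD[OF that]] by simp
  then have "d dvd Gcd S" by (simp add: Gcd_greatest)
  then have d1: "d = 1" using g by simp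
  then have "1 \<in> D" using dprop by simp
  then obtain a b where ab: "a \<in> S0" "b \<in> S0" "1 = int a - int b" unfolding D_def by blast
  then have a_eq: "a = b + 1" by linarith
  have mulS: "x \<in> S \<Longrightarrow> k \<ge> 1 \<Longrightarrow> k * x \<in> S" for x k
  proof (induction k)
    case 0 then show ?case by simp
  next
    case (Suc k) then show ?case by (cases k) (auto intro: add)
  qed
  show ?thesis
  proof (cases "b = 0")
    case True
    then have "1 \<in> S" using ab a_eq unfolding S0_def by auto
    then show ?thesis using mulS[of 1] by (intro exI[of _ 1]) auto
  next
    case False
    then have bS: "b \<in> S" and aS: "b + 1 \<in> S" using ab a_eq unfolding S0_def by auto
    show ?thesis
    proof (intro exI[of _ "b * b"] allI impI)
      fix n assume n: "b * b \<le> n"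
      define q where "q = n div b"
      define r where "r = n mod b"
      have nq: "n = q * b + r" unfolding q_def r_def by simp
      have rb: "r < b" unfolding r_def using False by simp
      have qb: "b \<le> q" unfolding q_def using n False
        by (metis div_le_mono nonzero_mult_div_cancel_right)
      have n2: "n = (q - r) * b + r * (b + 1)" using nq rb qb
        by (simp add: algebra_simps diff_mult_distrib)
      have "(q - r) * b \<in> S" using mulS[OF bS] rb qb by simp
      show "n \<in> S"
      proof (cases "r = 0")
        case True then show ?thesis using \<open>(q - r) * b \<in> S\<close> n2 by simp
      next
        case False
        then have "r * (b+1) \<in> S" using mulS[OF aS] by simp
        then show ?thesis using add[OF \<open>(q - r) * b \<in> S\<close>] n2 by simp
      qed
    qed
  qed
qed

lemma mpow_add: "mpow P (a + b) i j = (\<Sum>k\<in>UNIV. mpow P a i k * mpow P b k j)"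
proof (induction b arbitrary: j)
  case 0
  show ?case by (simp add: if_distrib cong: if_cong)
next
  case (Suc b)
  have "mpow P (a + Suc b) i j = (\<Sum>l\<in>UNIV. mpow P (a + b) i l * P l j)" by simp
  also have "\<dots> = (\<Sum>l\<in>UNIV. \<Sum>k\<in>UNIV. mpow P a i k * mpow P b k l * P l j)"
    by (simp add: Suc sum_distrib_right)
  also have "\<dots> = (\<Sum>k\<in>UNIV. mpow P a i k * (\<Sum>l\<in>UNIV. mpow P b k l * P l j))"
    by (subst sum.swap) (simp add: sum_distrib_left mult.assoc)
  finally show ?case by simp
qed

lemma sum_ite_mult: "(\<Sum>k\<in>UNIV. (if i = k then 1 else 0) * f k) = (f (i::'e::finite)::real)"
proof -
  have "(\<Sum>k\<in>UNIV. (if i = k then 1 else 0) * f k) = (\<Sum>k\<in>UNIV. if i = k then f k else 0)"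
    by (rule sum.cong) auto
  then show ?thesis by (simp add: sum.delta sum.delta')
qed

lemma mpow_1: "mpow P 1 i j = P i j"
  by (simp add: sum_ite_mult)

lemma mpow_Suc_left: "mpow P (Suc n) i j = (\<Sum>k\<in>UNIV. P i k * mpow P n k j)"
  using mpow_add[of P 1 n i j] by (simp only: mpow_1) simp

context
  fixes P :: "'e::finite \<Rightarrow> 'e \<Rightarrow> real"
  assumes stoch: "stochastic_matrix P"
begin

lemma P_nonneg: "0 \<le> P i j" using stoch unfolding stochastic_matrix_def by auto
lemma P_sum: "(\<Sum>j\<in>UNIV. P i j) = 1" using stoch unfolding stochastic_matrix_def by auto

lemma mpow_nonneg: "0 \<le> mpow P n i j"
  by (induction n arbitrary: j) (auto intro!: sum_nonneg mult_nonneg_nonneg P_nonneg)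

lemma mpow_sum: "(\<Sum>j\<in>UNIV. mpow P n i j) = 1"
proof (induction n)
  case 0 then show ?case by simp
next
  case (Suc n)
  have "(\<Sum>j\<in>UNIV. mpow P (Suc n) i j) = (\<Sum>k\<in>UNIV. mpow P n i k * (\<Sum>j\<in>UNIV. P k j))"
    by (simp add: sum_distrib_left) (rule sum.swap)
  also have "\<dots> = 1" using Suc by (simp add: P_sum)
  finally show ?case .
qed

lemma mpow_le1: "mpow P n i j \<le> 1"
proof -
  have "mpow P n i j \<le> (\<Sum>j\<in>UNIV. mpow P n i j)"
    by (rule member_le_sum) (auto simp: mpow_nonneg)
  then show ?thesis by (simp add: mpow_sum)
qed

lemma mpow_ge_prod: "mpow P a i k * mpow P b k j \<le> mpow P (a + b) i j"
  unfolding mpow_add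
  by (rule member_le_sum[of k UNIV "\<lambda>k. mpow P a i k * mpow P b k j"])
     (auto intro: mult_nonneg_nonneg mpow_nonneg)

lemma mpow_pos:
  assumes irred: "irreducible_matrix P" and aper: "aperiodic_matrix P"
  shows "\<exists>N>0. \<forall>i j. mpow P N i j > 0"
proof -
  have "\<exists>N. \<forall>n\<ge>N. mpow P n i i > 0" for i
  proof -
    let ?S = "{n::nat. 1 \<le> n \<and> mpow P n i i > 0}"
    have "Gcd ?S = 1" using aper unfolding aperiodic_matrix_def by blast
    moreover have "a + b \<in> ?S" if "a \<in> ?S" "b \<in> ?S" for a b
    proof -
      have "0 < mpow P a i i * mpow P b i i" using that by auto
      also have "\<dots> \<le> mpow P (a+b) i i" by (rule mpow_ge_prod)
      finally show ?thesis using that by auto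
    qed
    ultimately obtain N where "\<forall>n\<ge>N. n \<in> ?S" using semigroup_gcd1[of ?S] by blast
    then show ?thesis by auto
  qed
  then obtain Nf where Nf: "\<And>i n. n \<ge> Nf i \<Longrightarrow> mpow P n i i > 0" by metis
  have "\<exists>r. mpow P r i j > 0" for i j using irred unfolding irreducible_matrix_def by blast
  then obtain rf where rf: "\<And>i j. mpow P (rf i j) i j > 0" by metis
  define N where "N = Max (range Nf) + Max (range (\<lambda>(i,j). rf i j)) + 1"
  have "mpow P N i j > 0" for i j
  proof -
    have "rf i j \<le> Max (range (\<lambda>(i,j). rf i j))"
      by (rule Max_ge) (auto intro: image_eqI[of _ _ "(i,j)"])
    moreover have "Nf i \<le> Max (range Nf)" by (rule Max_ge) auto
    ultimately have le: "Nf i \<le> N - rf i j" and eq: "N = (N - rf i j) + rf i j"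
      unfolding N_def by linarith+
    have "0 < mpow P (N - rf i j) i i * mpow P (rf i j) i j"
      using Nf[OF le] rf by simp
    also have "\<dots> \<le> mpow P N i j" using mpow_ge_prod[of "N - rf i j" i i "rf i j" j] eq by simp
    finally show ?thesis .
  qed
  moreover have "N > 0" unfolding N_def by simp
  ultimately show ?thesis by blast
qed

end

lemma avg_bounds:
  fixes a f :: "'e::finite \<Rightarrow> real"
  assumes "\<And>j. 0 \<le> a j" "(\<Sum>j\<in>UNIV. a j) = 1" "\<And>j. lo \<le> f j" "\<And>j. f j \<le> hi"
  shows "lo \<le> (\<Sum>j\<in>UNIV. a j * f j)" "(\<Sum>j\<in>UNIV. a j * f j) \<le> hi"
proof -
  have "(\<Sum>j\<in>UNIV. a j * lo) \<le> (\<Sum>j\<in>UNIV. a j * f j)"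
    by (rule sum_mono) (simp add: assms mult_left_mono)
  then show "lo \<le> (\<Sum>j\<in>UNIV. a j * f j)" by (simp add: sum_distrib_right[symmetric] assms)
  have "(\<Sum>j\<in>UNIV. a j * f j) \<le> (\<Sum>j\<in>UNIV. a j * hi)"
    by (rule sum_mono) (simp add: assms mult_left_mono)
  then show "(\<Sum>j\<in>UNIV. a j * f j) \<le> hi" by (simp add: sum_distrib_right[symmetric] assms)
qed

lemma contraction:
  fixes a :: "'e::finite \<Rightarrow> 'e \<Rightarrow> real" and f :: "'e \<Rightarrow> real"
  assumes a0: "\<And>i j. 0 \<le> a i j" and a1: "\<And>i. (\<Sum>j\<in>UNIV. a i j) = 1" and aeps: "\<And>i j. \<epsilon> \<le> a i j"
    and eps0: "0 \<le> \<epsilon>"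
    and lo: "\<And>j. lo \<le> f j" and hi: "\<And>j. f j \<le> hi"
  shows "\<exists>lo' hi'. hi' - lo' \<le> (1 - \<epsilon>) * (hi - lo) \<and>
            (\<forall>i. lo' \<le> (\<Sum>j\<in>UNIV. a i j * f j) \<and> (\<Sum>j\<in>UNIV. a i j * f j) \<le> hi')"
proof -
  have "Min (range f) \<in> range f" by (rule Min_in) auto
  then obtain j0 where "f j0 = Min (range f)" by (metis rangeE)
  then have j0: "\<And>j. f j0 \<le> f j" by simp
  have "Max (range f) \<in> range f" by (rule Max_in) auto
  then obtain j1 where "f j1 = Max (range f)" by (metis rangeE)
  then have j1: "\<And>j. f j \<le> f j1" by simp
  have up: "(\<Sum>j\<in>UNIV. a i j * f j) \<le> hi - \<epsilon> * (hi - f j0)" for i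
  proof -
    have "a i j0 * (hi - f j0) \<le> (\<Sum>j\<in>UNIV. a i j * (hi - f j))"
      by (rule member_le_sum[of j0 UNIV "\<lambda>j. a i j * (hi - f j)"]) (auto intro!: mult_nonneg_nonneg a0 simp: hi)
    moreover have "(\<Sum>j\<in>UNIV. a i j * (hi - f j)) = hi - (\<Sum>j\<in>UNIV. a i j * f j)"
      by (simp add: right_diff_distrib sum_subtractf sum_distrib_right[symmetric] a1)
    moreover have "\<epsilon> * (hi - f j0) \<le> a i j0 * (hi - f j0)"
      by (rule mult_right_mono) (auto simp: aeps hi)
    ultimately show ?thesis by linarith
  qed
  have dn: "lo + \<epsilon> * (f j1 - lo) \<le> (\<Sum>j\<in>UNIV. a i j * f j)" for i
  proof -
    have "a i j1 * (f j1 - lo) \<le> (\<Sum>j\<in>UNIV. a i j * (f j - lo))"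
      by (rule member_le_sum[of j1 UNIV "\<lambda>j. a i j * (f j - lo)"]) (auto intro!: mult_nonneg_nonneg a0 simp: lo)
    moreover have "(\<Sum>j\<in>UNIV. a i j * (f j - lo)) = (\<Sum>j\<in>UNIV. a i j * f j) - lo"
      by (simp add: right_diff_distrib sum_subtractf sum_distrib_right[symmetric] a1)
    moreover have "\<epsilon> * (f j1 - lo) \<le> a i j1 * (f j1 - lo)"
      by (rule mult_right_mono) (auto simp: aeps lo)
    ultimately show ?thesis by linarith
  qed
  have "\<epsilon> * (f j0) \<le> \<epsilon> * f j1" using j1[of j0] eps0 by (simp add: mult_left_mono)
  then have "(hi - \<epsilon> * (hi - f j0)) - (lo + \<epsilon> * (f j1 - lo)) \<le> (1 - \<epsilon>) * (hi - lo)"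
    by (simp add: algebra_simps)
  then show ?thesis using up dn by blast
qed

context
  fixes P :: "'e::finite \<Rightarrow> 'e \<Rightarrow> real"
  assumes stoch: "stochastic_matrix P"
begin

lemma mpow_shift: "(\<Sum>j\<in>UNIV. mpow P (N + n) i j * f j)
   = (\<Sum>k\<in>UNIV. mpow P N i k * (\<Sum>j\<in>UNIV. mpow P n k j * f j))"
  by (simp add: mpow_add sum_distrib_right sum_distrib_left mult.assoc) (rule sum.swap)

lemma iterate_bound:
  fixes f :: "'e \<Rightarrow> real"
  assumes N: "N > 0" and eps: "\<And>i j. \<epsilon> \<le> mpow P N i j" "0 \<le> \<epsilon>" "\<epsilon> \<le> 1"
    and f: "\<And>j. lo0 \<le> f j" "\<And>j. f j \<le> hi0"
  shows "\<exists>lo hi. hi - lo \<le> (1 - \<epsilon>) ^ (n div N) * (hi0 - lo0) \<and>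
            (\<forall>i. lo \<le> (\<Sum>j\<in>UNIV. mpow P n i j * f j) \<and> (\<Sum>j\<in>UNIV. mpow P n i j * f j) \<le> hi)"
proof (induction n rule: less_induct)
  case (less n)
  show ?case
  proof (cases "n < N")
    case True
    then have "n div N = 0" by simp
    then show ?thesis
      using avg_bounds[of "mpow P n _" lo0 f hi0] f
      by (intro exI[of _ lo0] exI[of _ hi0]) (auto simp: mpow_nonneg[OF stoch] mpow_sum[OF stoch])
  next
    case False
    define n' where "n' = n - N"
    have nn: "n = N + n'" using False unfolding n'_def by simp
    have dv: "n div N = Suc (n' div N)" using nn N by simp
    obtain lo hi where lh: "hi - lo \<le> (1 - \<epsilon>) ^ (n' div N) * (hi0 - lo0)"
      "\<And>i. lo \<le> (\<Sum>j\<in>UNIV. mpow P n' i j * f j)" "\<And>i. (\<Sum>j\<in>UNIV. mpow P n' i j * f j) \<le> hi"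
      using less[of n'] N nn by auto
    have "\<exists>lo' hi'. hi' - lo' \<le> (1 - \<epsilon>) * (hi - lo) \<and> (\<forall>i. lo' \<le> (\<Sum>j\<in>UNIV. mpow P n i j * f j)
              \<and> (\<Sum>j\<in>UNIV. mpow P n i j * f j) \<le> hi')"
      unfolding nn mpow_shift
      by (rule contraction) (auto simp: mpow_nonneg[OF stoch] mpow_sum[OF stoch] eps lh)
    then obtain lo' hi' where lf: "hi' - lo' \<le> (1 - \<epsilon>) * (hi - lo)"
      "\<And>i. lo' \<le> (\<Sum>j\<in>UNIV. mpow P n i j * f j)" "\<And>i. (\<Sum>j\<in>UNIV. mpow P n i j * f j) \<le> hi'"
      by blast
    have "(1 - \<epsilon>) * (hi - lo) \<le> (1 - \<epsilon>) * ((1 - \<epsilon>) ^ (n' div N) * (hi0 - lo0))"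
      by (rule mult_left_mono) (use lh eps in auto)
    then have "hi' - lo' \<le> (1 - \<epsilon>) ^ (n div N) * (hi0 - lo0)" using lf(1) dv by simp
    then show ?thesis using lf by blast
  qed
qed

end

lemma Vdirs_eq: "(Vdirs :: (real^'d::finite) set) = range (\<lambda>k. axis k 1) \<union> range (\<lambda>k. axis k (-1))"
  unfolding Vdirs_def by auto

lemma Vdirs_finite: "finite (Vdirs :: (real^'d::finite) set)"
  unfolding Vdirs_eq by simp

lemma axis_neg1: "axis k (-1::real) = - axis k 1"
  by (simp add: axis_def vec_eq_iff)

lemma Vdirs_norm: "u \<in> (Vdirs :: (real^'d::finite) set) \<Longrightarrow> norm u = 1"
  unfolding Vdirs_eq by (auto simp: axis_neg1)

lemma Vdirs_comp: "u \<in> (Vdirs :: (real^'d::finite) set) \<Longrightarrow> \<bar>u $ c\<bar> \<le> 1"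
  using component_le_norm_cart[of u c] Vdirs_norm[of u] by simp

context
  fixes p :: "'e \<Rightarrow> real^'d::finite \<Rightarrow> real^'d \<Rightarrow> real"
  assumes p_nonneg: "\<And>k y u. u \<in> Vdirs \<Longrightarrow> 0 \<le> p k y u"
    and p_sum: "\<And>k y. (\<Sum>u\<in>Vdirs. p k y u) = 1"
begin

lemma gfun_comp: "\<bar>gfun p k y $ c\<bar> \<le> 1"
proof -
  have "\<bar>gfun p k y $ c\<bar> = \<bar>\<Sum>u\<in>Vdirs. p k y u * u $ c\<bar>" unfolding gfun_def by simp
  also have "\<dots> \<le> (\<Sum>u\<in>Vdirs. \<bar>p k y u * u $ c\<bar>)" by (rule sum_abs)
  also have "\<dots> \<le> (\<Sum>u\<in>Vdirs. p k y u)"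
    by (rule sum_mono) (auto simp: abs_mult p_nonneg Vdirs_comp mult_left_le intro: mult_left_le)
  finally show ?thesis by (simp add: p_sum)
qed

lemma gfun_norm: "norm (gfun p k y) \<le> 1"
proof -
  have "norm (gfun p k y) \<le> (\<Sum>u\<in>Vdirs. norm (p k y u *\<^sub>R u))" unfolding gfun_def by (rule norm_sum)
  also have "\<dots> = (\<Sum>u\<in>Vdirs. p k y u)"
    by (rule sum.cong) (auto simp: p_nonneg Vdirs_norm)
  finally show ?thesis by (simp add: p_sum)
qed

end

context
  fixes P :: "'e::finite \<Rightarrow> 'e \<Rightarrow> real" and \<mu> :: "'e \<Rightarrow> real"
    and p :: "'e \<Rightarrow> real^'d::finite \<Rightarrow> real^'d \<Rightarrow> real"
  assumes stoch: "stochastic_matrix P"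
    and irred: "irreducible_matrix P"
    and aper: "aperiodic_matrix P"
    and inv: "invariant_probability P \<mu>"
    and p_nonneg: "\<And>k y u. u \<in> Vdirs \<Longrightarrow> 0 \<le> p k y u"
    and p_sum: "\<And>k y. (\<Sum>u\<in>Vdirs. p k y u) = 1"
    and centered: "\<And>y. (\<Sum>k\<in>UNIV. \<mu> k *\<^sub>R gfun p k y) = 0"
begin

lemma mu_nonneg: "0 \<le> \<mu> i" and mu_sum: "(\<Sum>i\<in>UNIV. \<mu> i) = 1"
  and mu_inv: "(\<Sum>i\<in>UNIV. \<mu> i * P i j) = \<mu> j"
  using inv unfolding invariant_probability_def by auto

lemma mu_mpow: "(\<Sum>i\<in>UNIV. \<mu> i * mpow P n i j) = \<mu> j"
proof (induction n arbitrary: j)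
  case 0 then show ?case by (simp add: if_distrib[of "\<lambda>x. _ * x"] cong: if_cong)
next
  case (Suc n)
  have "(\<Sum>i\<in>UNIV. \<mu> i * mpow P (Suc n) i j) = (\<Sum>k\<in>UNIV. (\<Sum>i\<in>UNIV. \<mu> i * mpow P n i k) * P k j)"
    by (simp add: sum_distrib_left sum_distrib_right mult.assoc) (rule sum.swap)
  also have "\<dots> = \<mu> j" by (simp add: Suc mu_inv)
  finally show ?case .
qed

lemma hbound: "\<exists>K \<sigma>. 0 < \<sigma> \<and> \<sigma> < 1 \<and> 0 \<le> K \<and>
   (\<forall>n i y c. \<bar>\<Sum>j\<in>UNIV. mpow P n i j * (gfun p j y $ c)\<bar> \<le> K * \<sigma> ^ n)"
proof -
  obtain N where N: "N > 0" "\<And>i j. mpow P N i j > 0" using mpow_pos[OF stoch irred aper] by blast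
  define \<epsilon> where "\<epsilon> = Min (range (\<lambda>(i,j). mpow P N i j))"
  have "\<epsilon> \<in> range (\<lambda>(i,j). mpow P N i j)" unfolding \<epsilon>_def by (rule Min_in) auto
  then have eps_pos: "\<epsilon> > 0" using N by auto
  have eps_le: "\<epsilon> \<le> mpow P N i j" for i j unfolding \<epsilon>_def by (rule Min_le) (auto intro: image_eqI[of _ _ "(i,j)"])
  have eps1: "\<epsilon> \<le> 1" using eps_le[of undefined undefined] mpow_le1[OF stoch] order_trans by blast
  define \<rho> where "\<rho> = max (1 - \<epsilon>) (1/2)"
  have rho: "0 < \<rho>" "\<rho> < 1" "1 - \<epsilon> \<le> \<rho>" unfolding \<rho>_def using eps_pos by auto
  define \<sigma> where "\<sigma> = root N \<rho>"
  have sig: "0 < \<sigma>" "\<sigma> < 1" "\<sigma> ^ N = \<rho>" unfolding \<sigma>_def using rho N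
    by (auto simp: real_root_gt_zero)
  have rs: "\<rho> ^ (n div N) \<le> (1 / \<rho>) * \<sigma> ^ n" for n
  proof -
    have "\<sigma> ^ n = \<sigma> ^ (N * (n div N) + n mod N)" by simp
    also have "\<dots> = \<rho> ^ (n div N) * \<sigma> ^ (n mod N)" by (simp only: power_add power_mult sig(3))
    finally have e: "\<sigma> ^ n = \<rho> ^ (n div N) * \<sigma> ^ (n mod N)" .
    have "\<sigma> ^ N \<le> \<sigma> ^ (n mod N)"
      by (rule power_decreasing) (use sig N in \<open>auto intro: less_imp_le\<close>)
    then have "\<rho> ^ (n div N) * \<rho> \<le> \<sigma> ^ n" unfolding e using sig rho
      by (metis mult_left_mono zero_le_power less_imp_le)
    then show ?thesis using rho by (simp add: field_simps)
  qed
  have main: "\<bar>\<Sum>j\<in>UNIV. mpow P n i j * (gfun p j y $ c)\<bar> \<le> (2 / \<rho>) * \<sigma> ^ n" for n i y c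
  proof -
    define f where "f j = gfun p j y $ c" for j
    have "\<bar>f j\<bar> \<le> 1" for j unfolding f_def by (rule gfun_comp[where p=p]) (simp_all add: p_nonneg p_sum)
    then have fb: "-1 \<le> f j" "f j \<le> 1" for j by (simp_all add: abs_le_iff)
    have "\<exists>lo hi. hi - lo \<le> (1 - \<epsilon>) ^ (n div N) * (1 - (-1)) \<and>
            (\<forall>i. lo \<le> (\<Sum>j\<in>UNIV. mpow P n i j * f j) \<and> (\<Sum>j\<in>UNIV. mpow P n i j * f j) \<le> hi)"
      by (rule iterate_bound[OF stoch N(1) eps_le]) (use eps_pos eps1 fb in auto)
    then obtain lo hi where lh: "hi - lo \<le> (1 - \<epsilon>) ^ (n div N) * (1 - (-1))"
      "\<And>i. lo \<le> (\<Sum>j\<in>UNIV. mpow P n i j * f j)" "\<And>i. (\<Sum>j\<in>UNIV. mpow P n i j * f j) \<le> hi"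
      by blast
    have z: "(\<Sum>i\<in>UNIV. \<mu> i * (\<Sum>j\<in>UNIV. mpow P n i j * f j)) = 0"
    proof -
      have "(\<Sum>i\<in>UNIV. \<mu> i * (\<Sum>j\<in>UNIV. mpow P n i j * f j)) = (\<Sum>j\<in>UNIV. (\<Sum>i\<in>UNIV. \<mu> i * mpow P n i j) * f j)"
        by (simp add: sum_distrib_left sum_distrib_right mult.assoc) (rule sum.swap)
      also have "\<dots> = (\<Sum>j\<in>UNIV. \<mu> j * f j)" by (simp add: mu_mpow)
      also have "\<dots> = (\<Sum>k\<in>UNIV. \<mu> k *\<^sub>R gfun p k y) $ c" unfolding f_def by simp
      finally show ?thesis by (simp add: centered)
    qed
    have "lo \<le> 0" "0 \<le> hi" using avg_bounds[where a=\<mu> and f="\<lambda>i. (\<Sum>j\<in>UNIV. mpow P n i j * f j)" and lo=lo and hi=hi] lh z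
      by (auto simp: mu_nonneg mu_sum)
    then have "\<bar>\<Sum>j\<in>UNIV. mpow P n i j * f j\<bar> \<le> hi - lo" using lh(2)[of i] lh(3)[of i] by linarith
    also have "\<dots> \<le> (1 - \<epsilon>) ^ (n div N) * 2" using lh(1) by simp
    also have "\<dots> \<le> \<rho> ^ (n div N) * 2"
      by (rule mult_right_mono, rule power_mono) (use rho eps1 in auto)
    also have "\<dots> \<le> (1 / \<rho>) * \<sigma> ^ n * 2" by (rule mult_right_mono[OF rs]) simp
    finally show ?thesis unfolding f_def by (simp add: mult.commute)
  qed
  show ?thesis using main sig rho by (intro exI[of _ "2 / \<rho>"] exI[of _ \<sigma>]) auto
qed

definition vterm where "vterm n i y = (\<Sum>j\<in>UNIV. mpow P n i j *\<^sub>R gfun p j y)"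

lemma vterm_bound: "\<exists>K \<sigma>. 0 < \<sigma> \<and> \<sigma> < 1 \<and> 0 \<le> K \<and> (\<forall>n i y. norm (vterm n i y) \<le> K * \<sigma> ^ n)"
proof -
  obtain K \<sigma> where Ks: "0 < \<sigma>" "\<sigma> < 1" "0 \<le> K"
    "\<And>n i y c. \<bar>\<Sum>j\<in>UNIV. mpow P n i j * (gfun p j y $ c)\<bar> \<le> K * \<sigma> ^ n"
    using hbound by blast
  have "norm (vterm n i y) \<le> (real CARD('d) * K) * \<sigma> ^ n" for n i y
  proof -
    have "norm (vterm n i y) \<le> (\<Sum>c\<in>UNIV. \<bar>vterm n i y $ c\<bar>)" by (rule norm_le_l1_cart)
    also have "\<dots> \<le> (\<Sum>c\<in>(UNIV::'d set). K * \<sigma> ^ n)"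
      by (rule sum_mono) (simp add: vterm_def Ks(4))
    finally show ?thesis by simp
  qed
  then show ?thesis using Ks by (intro exI[of _ "real CARD('d) * K"] exI[of _ \<sigma>]) auto
qed

lemma vfun_eq: "vfun P p i y = (\<Sum>n. vterm n i y)"
  unfolding vfun_def vterm_def ..

lemma vterm_summable: "summable (\<lambda>n. vterm n i y)" and vterm_summable_norm: "summable (\<lambda>n. norm (vterm n i y))"
proof -
  obtain K \<sigma> where Ks: "0 < \<sigma>" "\<sigma> < 1" "0 \<le> K" "\<And>n i y. norm (vterm n i y) \<le> K * \<sigma> ^ n"
    using vterm_bound by blast
  have s: "summable (\<lambda>n. K * \<sigma> ^ n)" using Ks by (intro summable_mult summable_geometric) simp
  show "summable (\<lambda>n. vterm n i y)" by (rule summable_comparison_test'[OF s]) (rule Ks(4))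
  show "summable (\<lambda>n. norm (vterm n i y))" by (rule summable_comparison_test'[OF s]) (simp add: Ks(4))
qed

lemma vfun_bounded: "\<exists>V. \<forall>i y. norm (vfun P p i y) \<le> V"
proof -
  obtain K \<sigma> where Ks: "0 < \<sigma>" "\<sigma> < 1" "0 \<le> K" "\<And>n i y. norm (vterm n i y) \<le> K * \<sigma> ^ n"
    using vterm_bound by blast
  have s: "summable (\<lambda>n. K * \<sigma> ^ n)" using Ks by (intro summable_mult summable_geometric) simp
  have "norm (vfun P p i y) \<le> (\<Sum>n. K * \<sigma> ^ n)" for i y
  proof -
    have "norm (vfun P p i y) \<le> (\<Sum>n. norm (vterm n i y))"
      unfolding vfun_eq by (rule summable_norm[OF vterm_summable_norm])
    also have "\<dots> \<le> (\<Sum>n. K * \<sigma> ^ n)"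
      by (rule suminf_le[OF _ vterm_summable_norm s]) (rule Ks(4))
    finally show ?thesis .
  qed
  then show ?thesis by blast
qed

lemma vterm_Suc: "vterm (Suc n) i y = (\<Sum>k\<in>UNIV. P i k *\<^sub>R vterm n k y)"
proof -
  have "vterm (Suc n) i y = (\<Sum>j\<in>UNIV. \<Sum>k\<in>UNIV. (P i k * mpow P n k j) *\<^sub>R gfun p j y)"
    unfolding vterm_def mpow_Suc_left by (simp add: scaleR_sum_left)
  also have "\<dots> = (\<Sum>k\<in>UNIV. P i k *\<^sub>R vterm n k y)"
    unfolding vterm_def by (subst sum.swap) (simp add: scaleR_sum_right)
  finally show ?thesis .
qed

lemma poisson: "vfun P p i y = gfun p i y + Pop P (vfun P p) i y"
proof -
  have "(\<Sum>n. vterm (Suc n) i y) = vfun P p i y - vterm 0 i y"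
    unfolding vfun_eq by (rule suminf_split_head[OF vterm_summable])
  moreover have "vterm 0 i y = gfun p i y"
  proof -
    have "vterm 0 i y = (\<Sum>j\<in>UNIV. if i = j then gfun p j y else 0)"
      unfolding vterm_def by (rule sum.cong) auto
    then show ?thesis by simp
  qed
  moreover have "(\<Sum>n. vterm (Suc n) i y) = Pop P (vfun P p) i y"
  proof -
    have "(\<Sum>n. vterm (Suc n) i y) = (\<Sum>n. \<Sum>k\<in>UNIV. P i k *\<^sub>R vterm n k y)"
      by (simp add: vterm_Suc)
    also have "\<dots> = (\<Sum>k\<in>UNIV. \<Sum>n. P i k *\<^sub>R vterm n k y)"
      by (rule suminf_sum) (intro summable_scaleR_right vterm_summable)
    also have "\<dots> = (\<Sum>k\<in>UNIV. P i k *\<^sub>R (\<Sum>n. vterm n k y))"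
      by (rule sum.cong[OF refl]) (rule suminf_scaleR_right[OF vterm_summable, symmetric])
    finally show ?thesis unfolding Pop_def vfun_eq .
  qed
  ultimately show ?thesis by (simp add: algebra_simps)
qed

end

lemma outer_nth: "outer u w $ i $ j = u $ i * w $ j"
  unfolding outer_def by simp

lemma norm_outer: "norm (outer (u::real^'d::finite) w) \<le> real CARD('d) * (norm u * norm w)"
proof -
  have "norm (outer u w) \<le> (\<Sum>i\<in>UNIV. norm (outer u w $ i))"
    unfolding norm_vec_def by (rule L2_set_le_sum) simp
  also have "\<dots> \<le> (\<Sum>i\<in>(UNIV::'d set). norm u * norm w)"
  proof (rule sum_mono)
    fix i
    have "outer u w $ i = (u $ i) *\<^sub>R w" unfolding outer_def by (simp add: vec_eq_iff)
    then have "norm (outer u w $ i) = \<bar>u $ i\<bar> * norm w" by simp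
    also have "\<dots> \<le> norm u * norm w" by (rule mult_right_mono) (auto simp: component_le_norm_cart)
    finally show "norm (outer u w $ i) \<le> norm u * norm w" .
  qed
  finally show ?thesis by simp
qed

lemma norm_Pop:
  assumes stoch: "stochastic_matrix P" and b: "\<And>j. norm (f j z) \<le> B"
  shows "norm (Pop P f i z) \<le> B"
proof -
  have "norm (Pop P f i z) \<le> (\<Sum>j\<in>UNIV. norm (P i j *\<^sub>R f j z))" unfolding Pop_def by (rule norm_sum)
  also have "\<dots> \<le> (\<Sum>j\<in>UNIV. P i j * B)"
    by (rule sum_mono) (simp add: P_nonneg[OF stoch] b mult_left_mono)
  also have "\<dots> = B" by (simp add: sum_distrib_right[symmetric] P_sum[OF stoch])
  finally show ?thesis .
qed

lemma norm_pavg: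
  fixes q :: "real^'d::finite \<Rightarrow> real" and X :: "real^'d \<Rightarrow> 'b::real_normed_vector"
  assumes q0: "\<And>u. u \<in> Vdirs \<Longrightarrow> 0 \<le> q u" and q1: "(\<Sum>u\<in>Vdirs. q u) = 1"
    and b: "\<And>u. u \<in> Vdirs \<Longrightarrow> norm (X u) \<le> B"
  shows "norm (\<Sum>u\<in>Vdirs. q u *\<^sub>R X u) \<le> B"
proof -
  have "norm (\<Sum>u\<in>Vdirs. q u *\<^sub>R X u) \<le> (\<Sum>u\<in>Vdirs. norm (q u *\<^sub>R X u))" by (rule norm_sum)
  also have "\<dots> \<le> (\<Sum>u\<in>Vdirs. q u * B)"
    by (rule sum_mono) (simp add: q0 b mult_left_mono)
  also have "\<dots> = B" by (simp add: sum_distrib_right[symmetric] q1)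
  finally show ?thesis .
qed

lemma afun_bounded:
  fixes P :: "'e::finite \<Rightarrow> 'e \<Rightarrow> real" and p :: "'e \<Rightarrow> real^'d::finite \<Rightarrow> real^'d \<Rightarrow> real"
  assumes stoch: "stochastic_matrix P"
    and p_nonneg: "\<And>k y u. u \<in> Vdirs \<Longrightarrow> 0 \<le> p k y u"
    and p_sum: "\<And>k y. (\<Sum>u\<in>Vdirs. p k y u) = 1"
    and vb: "\<And>i y. norm (vfun P p i y) \<le> V"
  shows "\<exists>C. \<forall>m i y. norm (afun P p m i y) \<le> C"
proof -
  let ?d = "real CARD('d)"
  have V0: "0 \<le> V" using vb[of undefined undefined] norm_ge_zero order_trans by blast
  have gb: "norm (gfun p i y) \<le> 1" for i y by (rule gfun_norm[where p=p]) (simp_all add: p_nonneg p_sum)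
  have vgb: "norm (vfun P p i y - gfun p i y) \<le> V + 1" for i y
    using norm_triangle_ineq4[of "vfun P p i y" "gfun p i y"] vb[of i y] gb[of i y] by linarith
  have bb: "norm (bfun P p m i y) \<le> 2 * (V + 1)" for m i y
    unfolding bfun_def
  proof (rule norm_pavg)
    fix u :: "real^'d"
    show "norm (vfun P p i (y + inverse (real m) *\<^sub>R u) - gfun p i (y + inverse (real m) *\<^sub>R u) -
            (vfun P p i y - gfun p i y)) \<le> 2 * (V + 1)"
      using norm_triangle_ineq4[of "vfun P p i (y + inverse (real m) *\<^sub>R u) - gfun p i (y + inverse (real m) *\<^sub>R u)"
          "vfun P p i y - gfun p i y"] vgb[of i y] vgb[of i "y + inverse (real m) *\<^sub>R u"]
      by (simp only: mult_2)
  qed (simp_all add: p_nonneg p_sum)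
  have ab: "norm (alphafun p i y) \<le> ?d" for i y
    unfolding alphafun_def
  proof (rule norm_pavg)
    fix u :: "real^'d" assume "u \<in> Vdirs"
    then show "norm (outer u u) \<le> ?d" using norm_outer[of u u] by (simp add: Vdirs_norm)
  qed (simp_all add: p_nonneg p_sum)
  have vbb: "norm (vfun P p i y + bfun P p m i y) \<le> 3 * V + 2" for m i y
    using norm_triangle_ineq[of "vfun P p i y" "bfun P p m i y"] vb[of i y] bb[of m i y] by (smt (verit))
  have ob: "norm (outer (vfun P p i y + bfun P p m i y) (vfun P p i y + bfun P p m i y)) \<le> ?d * ((3*V+2) * (3*V+2))" for m i y
  proof -
    let ?w = "vfun P p i y + bfun P p m i y"
    have "norm ?w * norm ?w \<le> (3*V+2) * (3*V+2)"
      by (rule mult_mono[OF vbb vbb]) (use V0 in auto)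
    then have "?d * (norm ?w * norm ?w) \<le> ?d * ((3*V+2) * (3*V+2))" by (rule mult_left_mono) simp
    then show ?thesis using norm_outer[of ?w ?w] by linarith
  qed
  have ovv: "norm (outer (vfun P p j z) (vfun P p j z)) \<le> ?d * (V * V)" for j z
  proof -
    have "norm (vfun P p j z) * norm (vfun P p j z) \<le> V * V"
      by (rule mult_mono[OF vb vb]) (use V0 in auto)
    then have "?d * (norm (vfun P p j z) * norm (vfun P p j z)) \<le> ?d * (V * V)" by (rule mult_left_mono) simp
    then show ?thesis using norm_outer[of "vfun P p j z" "vfun P p j z"] by linarith
  qed
  have pvv: "norm (Pop P (\<lambda>j z. outer (vfun P p j z) (vfun P p j z)) i z) \<le> ?d * (V * V)" for i z
    by (rule norm_Pop[OF stoch]) (rule ovv)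
  have pv: "norm (Pop P (vfun P p) i z) \<le> V" for i z
    by (rule norm_Pop[OF stoch]) (rule vb)
  have ub: "norm (outer u (Pop P (vfun P p) i z)) \<le> ?d * V" "norm (outer (Pop P (vfun P p) i z) u) \<le> ?d * V"
    if "u \<in> Vdirs" for u i z
  proof -
    have "?d * norm (Pop P (vfun P p) i z) \<le> ?d * V" using pv[of i z] by (rule mult_left_mono) simp
    then show "norm (outer u (Pop P (vfun P p) i z)) \<le> ?d * V" "norm (outer (Pop P (vfun P p) i z) u) \<le> ?d * V"
      using norm_outer[of u "Pop P (vfun P p) i z"] norm_outer[of "Pop P (vfun P p) i z" u] Vdirs_norm[OF that]
      by (simp only: mult_1_left mult_1_right; linarith)+
  qed
  have sb: "norm (\<Sum>u\<in>Vdirs. p i y u *\<^sub>R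
          (Pop P (\<lambda>j z. outer (vfun P p j z) (vfun P p j z)) i (y + inverse (real m) *\<^sub>R u)
           + outer u (Pop P (vfun P p) i (y + inverse (real m) *\<^sub>R u))
           + outer (Pop P (vfun P p) i (y + inverse (real m) *\<^sub>R u)) u)) \<le> ?d * (V * V) + ?d * V + ?d * V" for m i y
  proof (rule norm_pavg)
    fix u :: "real^'d" assume u: "u \<in> Vdirs"
    show "norm (Pop P (\<lambda>j z. outer (vfun P p j z) (vfun P p j z)) i (y + inverse (real m) *\<^sub>R u)
           + outer u (Pop P (vfun P p) i (y + inverse (real m) *\<^sub>R u))
           + outer (Pop P (vfun P p) i (y + inverse (real m) *\<^sub>R u)) u) \<le> ?d * (V * V) + ?d * V + ?d * V"
    proof -
      let ?z = "y + inverse (real m) *\<^sub>R u"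
      let ?A = "Pop P (\<lambda>j z. outer (vfun P p j z) (vfun P p j z)) i ?z"
      let ?B = "outer u (Pop P (vfun P p) i ?z)"
      let ?C = "outer (Pop P (vfun P p) i ?z) u"
      have "norm (?A + ?B + ?C) \<le> norm ?A + norm ?B + norm ?C"
        using norm_triangle_ineq[of "?A + ?B" ?C] norm_triangle_ineq[of ?A ?B] by linarith
      then show ?thesis using pvv[of i ?z] ub[OF u, of i ?z] by linarith
    qed
  qed (simp_all add: p_nonneg p_sum)
  have "norm (afun P p m i y) \<le> ?d + ?d * ((3*V+2) * (3*V+2)) + (?d * (V * V) + ?d * V + ?d * V)" for m i y
  proof -
    let ?A = "alphafun p i y"
    let ?O = "outer (vfun P p i y + bfun P p m i y) (vfun P p i y + bfun P p m i y)"
    let ?S = "(\<Sum>u\<in>Vdirs. p i y u *\<^sub>R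
          (Pop P (\<lambda>j z. outer (vfun P p j z) (vfun P p j z)) i (y + inverse (real m) *\<^sub>R u)
           + outer u (Pop P (vfun P p) i (y + inverse (real m) *\<^sub>R u))
           + outer (Pop P (vfun P p) i (y + inverse (real m) *\<^sub>R u)) u))"
    have "norm (?A - ?O + ?S) \<le> norm ?A + norm ?O + norm ?S"
      using norm_triangle_ineq[of "?A - ?O" ?S] norm_triangle_ineq4[of ?A ?O] by linarith
    then show ?thesis unfolding afun_def using ab[of i y] ob[of i y m] sb[of i y m] by linarith
  qed
  then show ?thesis by blast
qed

definition disc :: "'a measure \<Rightarrow> ('a \<Rightarrow> 'b) \<Rightarrow> 'b set \<Rightarrow> bool" where
  "disc G X R \<longleftrightarrow> X \<in> measurable G (count_space UNIV) \<and> finite R \<and> (\<forall>\<omega>\<in>space G. X \<omega> \<in> R)"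

lemma disc_pair:
  assumes X: "disc G X R" and Y: "disc G Y S"
  shows "disc G (\<lambda>\<omega>. (X \<omega>, Y \<omega>)) (R \<times> S)"
proof -
  have XR: "X \<omega> \<in> R" "Y \<omega> \<in> S" if "\<omega> \<in> space G" for \<omega> using X Y that unfolding disc_def by auto
  have fin: "finite R" "finite S" using X Y unfolding disc_def by auto
  have "(\<lambda>\<omega>. (X \<omega>, Y \<omega>)) -` B \<inter> space G \<in> sets G" for B
  proof -
    have eq: "(\<lambda>\<omega>. (X \<omega>, Y \<omega>)) -` B \<inter> space G =
       (\<Union>z\<in>B \<inter> (R \<times> S). (X -` {fst z} \<inter> space G) \<inter> (Y -` {snd z} \<inter> space G))"
      using XR by auto
    have "X -` {a} \<inter> space G \<in> sets G" "Y -` {b} \<inter> space G \<in> sets G" for a b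
      using X Y unfolding disc_def by (auto intro: measurable_sets)
    then show ?thesis unfolding eq using fin
      by (intro sets.finite_UN) auto
  qed
  then have "(\<lambda>\<omega>. (X \<omega>, Y \<omega>)) \<in> measurable G (count_space UNIV)"
    unfolding measurable_def by auto
  then show ?thesis using fin XR unfolding disc_def by auto
qed

lemma disc_map:
  assumes X: "disc G X R"
  shows "disc G (\<lambda>\<omega>. h (X \<omega>)) (h ` R)"
proof -
  have "(\<lambda>\<omega>. h (X \<omega>)) \<in> measurable G (count_space UNIV)"
    using X unfolding disc_def by (auto intro: measurable_compose[where f=X and N="count_space UNIV"])
  then show ?thesis using X unfolding disc_def by auto
qed

lemma disc_meas:
  assumes X: "disc G X R"
  shows "(\<lambda>\<omega>. h (X \<omega>)) \<in> borel_measurable G"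
  using X unfolding disc_def by (auto intro: measurable_compose[where f=X and N="count_space UNIV"])

lemma disc_mono:
  assumes "subalgebra G' G" "disc G X R"
  shows "disc G' X R"
  using assms unfolding disc_def subalgebra_def by (auto intro: measurable_from_subalg[OF assms(1)])

lemma disc_const: "disc G (\<lambda>\<omega>. c) {c}"
  unfolding disc_def by auto

lemma disc_bounded:
  fixes h :: "'b \<Rightarrow> 'c::real_normed_vector"
  assumes X: "disc G X R"
  shows "\<exists>B. \<forall>\<omega>\<in>space G. norm (h (X \<omega>)) \<le> B"
proof -
  have fin: "finite R" and XR: "\<And>\<omega>. \<omega> \<in> space G \<Longrightarrow> X \<omega> \<in> R" using X unfolding disc_def by auto
  have "norm (h (X \<omega>)) \<le> (\<Sum>r\<in>R. norm (h r))" if "\<omega> \<in> space G" for \<omega>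
    by (rule member_le_sum[of "X \<omega>" R "\<lambda>r. norm (h r)"]) (auto simp: fin XR that)
  then show ?thesis by blast
qed

lemma (in finite_measure) int_bound:
  fixes f :: "'a \<Rightarrow> real"
  assumes "f \<in> borel_measurable M" "AE x in M. \<bar>f x\<bar> \<le> B"
  shows "integrable M f"
  using assms by (intro integrable_const_bound[where B=B]) auto

lemma (in finite_measure) int_disc:
  fixes h :: "'b \<Rightarrow> real"
  assumes X: "X \<in> measurable M (count_space UNIV)" and fin: "finite R"
    and XR: "\<And>\<omega>. \<omega> \<in> space M \<Longrightarrow> X \<omega> \<in> R" and B: "B \<in> sets M"
  shows "(\<integral>\<omega>. indicator B \<omega> * h (X \<omega>) \<partial>M) = (\<Sum>x\<in>R. h x * measure M (B \<inter> {\<omega>\<in>space M. X \<omega> = x}))"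
proof -
  have sets: "B \<inter> {\<omega>\<in>space M. X \<omega> = x} \<in> sets M" for x
  proof -
    have "B \<inter> {\<omega>\<in>space M. X \<omega> = x} = B \<inter> (X -` {x} \<inter> space M)" by auto
    then show ?thesis using B measurable_sets[OF X, of "{x}"] by auto
  qed
  have "(\<integral>\<omega>. indicator B \<omega> * h (X \<omega>) \<partial>M) = (\<integral>\<omega>. (\<Sum>x\<in>R. h x * indicator (B \<inter> {\<omega>\<in>space M. X \<omega> = x}) \<omega>) \<partial>M)"
  proof (rule Bochner_Integration.integral_cong[OF refl])
    fix \<omega> assume \<omega>: "\<omega> \<in> space M"
    have "(\<Sum>x\<in>R. h x * indicator (B \<inter> {\<omega>\<in>space M. X \<omega> = x}) \<omega>) = (\<Sum>x\<in>R. if x = X \<omega> then h (X \<omega>) * indicator B \<omega> else 0)"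
      by (rule sum.cong) (auto simp: indicator_def \<omega>)
    also have "\<dots> = indicator B \<omega> * h (X \<omega>)" using XR[OF \<omega>] fin by (simp add: sum.delta)
    finally show "indicator B \<omega> * h (X \<omega>) = (\<Sum>x\<in>R. h x * indicator (B \<inter> {\<omega>\<in>space M. X \<omega> = x}) \<omega>)" by simp
  qed
  also have "\<dots> = (\<Sum>x\<in>R. (\<integral>\<omega>. h x * indicator (B \<inter> {\<omega>\<in>space M. X \<omega> = x}) \<omega> \<partial>M))"
  proof (rule Bochner_Integration.integral_sum)
    fix x
    have "integrable M (indicator (B \<inter> {\<omega>\<in>space M. X \<omega> = x}) :: 'a \<Rightarrow> real)"
      by (rule integrable_real_indicator[OF sets]) (simp add: top.not_eq_extremum[symmetric])
    then show "integrable M (\<lambda>\<omega>. h x * indicator (B \<inter> {\<omega>\<in>space M. X \<omega> = x}) \<omega>)"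
      by (rule integrable_mult_right)
  qed
  also have "\<dots> = (\<Sum>x\<in>R. h x * measure M (B \<inter> {\<omega>\<in>space M. X \<omega> = x}))"
  proof (rule sum.cong[OF refl])
    fix x
    have m: "(B \<inter> {\<omega>\<in>space M. X \<omega> = x}) \<inter> space M = B \<inter> {\<omega>\<in>space M. X \<omega> = x}" by auto
    show "(\<integral>\<omega>. h x * indicator (B \<inter> {\<omega>\<in>space M. X \<omega> = x}) \<omega> \<partial>M) = h x * measure M (B \<inter> {\<omega>\<in>space M. X \<omega> = x})"
      by (simp only: integral_mult_right_zero Bochner_Integration.integral_indicator m)
  qed
  finally show ?thesis .
qed

locale mrw_ctx =
  fixes P :: "'e::finite \<Rightarrow> 'e \<Rightarrow> real" and p :: "'e \<Rightarrow> real^'d::finite \<Rightarrow> real^'d \<Rightarrow> real"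
    and m :: nat and M :: "'a measure" and \<xi> :: "nat \<Rightarrow> 'a \<Rightarrow> 'e" and J :: "nat \<Rightarrow> 'a \<Rightarrow> real^'d"
    and V :: real
  assumes stoch: "stochastic_matrix P"
    and p_nonneg: "\<And>k y u. u \<in> Vdirs \<Longrightarrow> 0 \<le> p k y u"
    and p_sum: "\<And>k y. (\<Sum>u\<in>Vdirs. p k y u) = 1"
    and vb: "\<And>i y. norm (vfun P p i y) \<le> V"
    and poisson: "\<And>i y. vfun P p i y = gfun p i y + Pop P (vfun P p) i y"
    and mrw: "mrw P p m M \<xi> J"
begin

abbreviation "F \<equiv> filt M \<xi> J"
abbreviation "S \<equiv> Sproc J"

lemma prob: "prob_space M" using mrw unfolding mrw_def by blast

lemma xi_meas: "\<xi> n \<in> measurable M (count_space UNIV)" using mrw unfolding mrw_def by blast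
lemma J_meas: "J n \<in> borel_measurable M" using mrw unfolding mrw_def by blast
lemma J_V: "\<omega> \<in> space M \<Longrightarrow> J n \<omega> \<in> Vdirs" using mrw unfolding mrw_def by blast
lemma key: "u \<in> Vdirs \<Longrightarrow> A \<in> sets (F n) \<Longrightarrow>
   measure M (A \<inter> {\<omega>\<in>space M. \<xi> (Suc n) \<omega> = k \<and> J (Suc n) \<omega> = u})
    = (\<integral>\<omega>. indicator A \<omega> * (P (\<xi> n \<omega>) k * p (\<xi> n \<omega>) (inverse (real m) *\<^sub>R S n \<omega>) u) \<partial>M)"
  using mrw unfolding mrw_def by blast

definition gen where "gen n = (\<Union>i\<in>{..n}. {\<xi> i -` B \<inter> space M | B. True} \<union> {J i -` B \<inter> space M | B. B \<in> sets borel})"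

lemma gen_Pow: "gen n \<subseteq> Pow (space M)" unfolding gen_def by auto

lemma sets_F: "sets (F n) = sigma_sets (space M) (gen n)"
  unfolding filt_def gen_def[symmetric] by (rule sets_measure_of[OF gen_Pow])

lemma space_F: "space (F n) = space M"
  unfolding filt_def gen_def[symmetric] by (rule space_measure_of[OF gen_Pow])

lemma gen_sets: "gen n \<subseteq> sets M"
proof -
  have "\<xi> i -` B \<inter> space M \<in> sets M" for i B using measurable_sets[OF xi_meas, of B i] by simp
  moreover have "J i -` B \<inter> space M \<in> sets M" if "B \<in> sets borel" for i B
    using measurable_sets[OF J_meas that] .
  ultimately show ?thesis unfolding gen_def by auto
qed

lemma F_sub: "sets (F n) \<subseteq> sets M"
  unfolding sets_F by (rule sets.sigma_sets_subset[OF gen_sets])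

lemma subalg: "subalgebra M (F n)"
  unfolding subalgebra_def using F_sub space_F by auto

lemma gen_mono: "k \<le> n \<Longrightarrow> gen k \<subseteq> gen n" unfolding gen_def by (intro UN_mono) auto

lemma gen_xi: "i \<le> n \<Longrightarrow> \<xi> i -` B \<inter> space M \<in> gen n"
  unfolding gen_def by blast

lemma gen_J: "i \<le> n \<Longrightarrow> B \<in> sets borel \<Longrightarrow> J i -` B \<inter> space M \<in> gen n"
  unfolding gen_def by blast

lemma subalg_F: "k \<le> n \<Longrightarrow> subalgebra (F n) (F k)"
  unfolding subalgebra_def space_F sets_F using sigma_sets_mono'[OF gen_mono] by auto

lemma sfs: "sigma_finite_subalgebra M (F n)"
proof -
  interpret prob_space M by (rule prob)
  have "finite_measure_subalgebra M (F n)"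
    unfolding finite_measure_subalgebra_def finite_measure_subalgebra_axioms_def
    using finite_measure_axioms subalg by auto
  then show ?thesis by (rule finite_measure_subalgebra_is_sigma_finite)
qed

lemma in_F: "X \<in> gen n \<Longrightarrow> X \<in> sets (F n)" unfolding sets_F by auto

lemma disc_xi: "k \<le> n \<Longrightarrow> disc (F n) (\<xi> k) UNIV"
proof -
  assume k: "k \<le> n"
  have "\<xi> k -` B \<inter> space (F n) \<in> sets (F n)" for B
    unfolding space_F by (rule in_F[OF gen_xi[OF k]])
  then show ?thesis unfolding disc_def measurable_def by auto
qed

lemma disc_J: "k \<le> n \<Longrightarrow> disc (F n) (J k) Vdirs"
proof -
  assume k: "k \<le> n"
  have "J k -` B \<inter> space (F n) \<in> sets (F n)" for B
  proof -
    have eq: "J k -` B \<inter> space M = J k -` (B \<inter> Vdirs) \<inter> space M" using J_V by auto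
    have "B \<inter> Vdirs \<in> sets borel"
      by (rule borel_closed, rule finite_imp_closed) (simp add: Vdirs_finite)
    from in_F[OF gen_J[OF k this]] show ?thesis unfolding space_F eq .
  qed
  then show ?thesis unfolding disc_def measurable_def using J_V space_F by (auto simp: Vdirs_finite)
qed

lemma S_0: "S 0 = (\<lambda>\<omega>. 0)" unfolding Sproc_def by auto
lemma S_Suc: "S (Suc n) \<omega> = S n \<omega> + J (Suc n) \<omega>" unfolding Sproc_def by simp

lemma disc_S: "\<exists>R. disc (F n) (S n) R"
proof (induction n)
  case 0 show ?case unfolding S_0 by (rule exI, rule disc_const)
next
  case (Suc n)
  then obtain R where "disc (F n) (S n) R" by blast
  then have "disc (F (Suc n)) (S n) R" by (rule disc_mono[OF subalg_F, rotated]) simp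
  then have "disc (F (Suc n)) (\<lambda>\<omega>. (S n \<omega>, J (Suc n) \<omega>)) (R \<times> Vdirs)"
    using disc_J[of "Suc n" "Suc n"] by (intro disc_pair) auto
  from disc_map[OF this, of "\<lambda>(a,b). a + b"] show ?case unfolding S_Suc by auto
qed

lemma disc_mono': "k \<le> n \<Longrightarrow> disc (F k) X R \<Longrightarrow> disc (F n) X R"
  by (rule disc_mono[OF subalg_F])

lemma disc_S': "k \<le> n \<Longrightarrow> \<exists>R. disc (F n) (S k) R"
  using disc_S disc_mono' by blast

lemma disc_D: "k \<le> n \<Longrightarrow> \<exists>R. disc (F n) (\<lambda>\<omega>. (\<xi> k \<omega>, S k \<omega>)) R"
  using disc_S'[of k n] disc_xi[of k n] disc_pair by blast

lemma disc_fun_meas: "k \<le> n \<Longrightarrow> (\<lambda>\<omega>. h (\<xi> k \<omega>) (S k \<omega>)) \<in> borel_measurable (F n)"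
  using disc_D[of k n] disc_meas[where h="\<lambda>(a,b). h a b"] by fastforce

end

sublocale mrw_ctx \<subseteq> prob_space M by (rule prob)

context mrw_ctx
begin

lemma key2:
  assumes u: "u \<in> Vdirs" and A: "A \<in> sets (F n)"
  shows "measure M ((A \<inter> {\<omega>\<in>space M. (\<xi> n \<omega>, S n \<omega>) = (i, s)}) \<inter> {\<omega>\<in>space M. \<xi> (Suc n) \<omega> = k \<and> J (Suc n) \<omega> = u})
     = measure M (A \<inter> {\<omega>\<in>space M. (\<xi> n \<omega>, S n \<omega>) = (i, s)}) * (P i k * p i (inverse (real m) *\<^sub>R s) u)"
proof -
  let ?D = "\<lambda>\<omega>. (\<xi> n \<omega>, S n \<omega>)"
  obtain R where DR: "disc (F n) ?D R" using disc_D[of n n] by blast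
  have "?D -` {(i,s)} \<inter> space (F n) \<in> sets (F n)"
    using DR unfolding disc_def by (auto intro: measurable_sets)
  then have "{\<omega>\<in>space M. ?D \<omega> = (i, s)} \<in> sets (F n)" unfolding space_F by (simp add: vimage_def Int_def conj_commute)
  then have Ais: "A \<inter> {\<omega>\<in>space M. ?D \<omega> = (i, s)} \<in> sets (F n)" using A by auto
  then have AisM: "A \<inter> {\<omega>\<in>space M. ?D \<omega> = (i, s)} \<in> sets M" using F_sub by auto
  let ?A = "A \<inter> {\<omega>\<in>space M. ?D \<omega> = (i, s)}"
  have "measure M (?A \<inter> {\<omega>\<in>space M. \<xi> (Suc n) \<omega> = k \<and> J (Suc n) \<omega> = u})
     = (\<integral>\<omega>. indicator ?A \<omega> * (P (\<xi> n \<omega>) k * p (\<xi> n \<omega>) (inverse (real m) *\<^sub>R S n \<omega>) u) \<partial>M)"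
    by (rule key[OF u Ais])
  also have "\<dots> = (\<integral>\<omega>. indicator ?A \<omega> * (P i k * p i (inverse (real m) *\<^sub>R s) u) \<partial>M)"
    by (rule Bochner_Integration.integral_cong[OF refl]) (auto simp: indicator_def)
  also have "\<dots> = measure M ?A * (P i k * p i (inverse (real m) *\<^sub>R s) u)"
  proof -
    have m: "?A \<inter> space M = ?A" by auto
    show ?thesis by (simp only: integral_mult_left_zero Bochner_Integration.integral_indicator m)
  qed
  finally show ?thesis .
qed

lemma step:
  fixes \<Phi> :: "'e \<Rightarrow> real^'d \<Rightarrow> 'e \<Rightarrow> real^'d \<Rightarrow> real"
  assumes A: "A \<in> sets (F n)"
  shows "(\<integral>\<omega>. indicator A \<omega> * \<Phi> (\<xi> n \<omega>) (S n \<omega>) (\<xi> (Suc n) \<omega>) (J (Suc n) \<omega>) \<partial>M)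
       = (\<integral>\<omega>. indicator A \<omega> * (\<Sum>k\<in>UNIV. \<Sum>u\<in>Vdirs. P (\<xi> n \<omega>) k * p (\<xi> n \<omega>) (inverse (real m) *\<^sub>R S n \<omega>) u
              * \<Phi> (\<xi> n \<omega>) (S n \<omega>) k u) \<partial>M)"
proof -
  let ?D = "\<lambda>\<omega>. (\<xi> n \<omega>, S n \<omega>)"
  let ?D4 = "\<lambda>\<omega>. (?D \<omega>, (\<xi> (Suc n) \<omega>, J (Suc n) \<omega>))"
  obtain R where DR: "disc (F n) ?D R" using disc_D[of n n] by blast
  have D4: "disc (F (Suc n)) ?D4 (R \<times> (UNIV \<times> Vdirs))"
    by (intro disc_pair disc_mono'[OF _ DR] disc_xi disc_J) auto
  have AM: "A \<in> sets M" using A F_sub by auto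
  have DM: "?D \<in> measurable M (count_space UNIV)" "finite R" "\<And>\<omega>. \<omega> \<in> space M \<Longrightarrow> ?D \<omega> \<in> R"
    using DR subalg[of n] unfolding disc_def by (auto intro: measurable_from_subalg simp: space_F)
  have D4M: "?D4 \<in> measurable M (count_space UNIV)" "finite (R \<times> ((UNIV::'e set) \<times> (Vdirs::(real^'d) set)))"
     "\<And>\<omega>. \<omega> \<in> space M \<Longrightarrow> ?D4 \<omega> \<in> R \<times> ((UNIV::'e set) \<times> (Vdirs::(real^'d) set))"
    using D4 subalg[of "Suc n"] unfolding disc_def by (auto intro: measurable_from_subalg simp: space_F)
  define G where "G = (\<lambda>(i,s). \<Sum>k\<in>UNIV. \<Sum>u\<in>Vdirs. P i k * p i (inverse (real m) *\<^sub>R s) u * \<Phi> i s k u)"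
  define Ais where "Ais = (\<lambda>z. A \<inter> {\<omega>\<in>space M. ?D \<omega> = z})"
  have "(\<integral>\<omega>. indicator A \<omega> * \<Phi> (\<xi> n \<omega>) (S n \<omega>) (\<xi> (Suc n) \<omega>) (J (Suc n) \<omega>) \<partial>M)
      = (\<integral>\<omega>. indicator A \<omega> * (\<lambda>((i,s),(k,u)). \<Phi> i s k u) (?D4 \<omega>) \<partial>M)" by simp
  also have "\<dots> = (\<Sum>z\<in>R \<times> (UNIV \<times> Vdirs). (\<lambda>((i,s),(k,u)). \<Phi> i s k u) z * measure M (A \<inter> {\<omega>\<in>space M. ?D4 \<omega> = z}))"
    by (rule int_disc[OF D4M AM])
  also have "\<dots> = (\<Sum>z\<in>R. \<Sum>y\<in>UNIV \<times> Vdirs. (\<lambda>((i,s),(k,u)). \<Phi> i s k u) (z, y) * measure M (A \<inter> {\<omega>\<in>space M. ?D4 \<omega> = (z, y)}))"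
    by (rule sum.cartesian_product')
  also have "\<dots> = (\<Sum>z\<in>R. G z * measure M (Ais z))"
  proof (rule sum.cong[OF refl])
    fix z assume "z \<in> R"
    obtain i s where z: "z = (i, s)" by (cases z)
    have "(\<Sum>y\<in>UNIV \<times> Vdirs. (\<lambda>((i,s),(k,u)). \<Phi> i s k u) (z, y) * measure M (A \<inter> {\<omega>\<in>space M. ?D4 \<omega> = (z, y)}))
        = (\<Sum>k\<in>UNIV. \<Sum>u\<in>Vdirs. \<Phi> i s k u * measure M (A \<inter> {\<omega>\<in>space M. ?D4 \<omega> = ((i, s), (k, u))}))"
      unfolding z by (subst sum.cartesian_product') simp
    also have "\<dots> = (\<Sum>k\<in>UNIV. \<Sum>u\<in>Vdirs. \<Phi> i s k u * (measure M (Ais (i, s)) * (P i k * p i (inverse (real m) *\<^sub>R s) u)))"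
    proof (intro sum.cong refl)
      fix k and u :: "real^'d" assume u: "u \<in> Vdirs"
      have "A \<inter> {\<omega>\<in>space M. ?D4 \<omega> = ((i, s), (k, u))} =
          (A \<inter> {\<omega>\<in>space M. (\<xi> n \<omega>, S n \<omega>) = (i, s)}) \<inter> {\<omega>\<in>space M. \<xi> (Suc n) \<omega> = k \<and> J (Suc n) \<omega> = u}"
        by auto
      then show "\<Phi> i s k u * measure M (A \<inter> {\<omega>\<in>space M. ?D4 \<omega> = ((i, s), (k, u))}) =
          \<Phi> i s k u * (measure M (Ais (i, s)) * (P i k * p i (inverse (real m) *\<^sub>R s) u))"
        unfolding Ais_def using key2[OF u A, of i s k] by simp
    qed
    also have "\<dots> = G z * measure M (Ais z)"
      unfolding G_def z by (simp add: sum_distrib_left sum_distrib_right mult_ac)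
    finally show "(\<Sum>y\<in>UNIV \<times> Vdirs. (\<lambda>((i,s),(k,u)). \<Phi> i s k u) (z, y) * measure M (A \<inter> {\<omega>\<in>space M. ?D4 \<omega> = (z, y)}))
        = G z * measure M (Ais z)" .
  qed
  also have "\<dots> = (\<integral>\<omega>. indicator A \<omega> * G (?D \<omega>) \<partial>M)"
    unfolding Ais_def by (rule int_disc[OF DM AM, symmetric])
  also have "\<dots> = (\<integral>\<omega>. indicator A \<omega> * (\<Sum>k\<in>UNIV. \<Sum>u\<in>Vdirs. P (\<xi> n \<omega>) k * p (\<xi> n \<omega>) (inverse (real m) *\<^sub>R S n \<omega>) u
              * \<Phi> (\<xi> n \<omega>) (S n \<omega>) k u) \<partial>M)"
    unfolding G_def by simp
  finally show ?thesis .
qed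

end

context
  fixes P :: "'e::finite \<Rightarrow> 'e \<Rightarrow> real" and p :: "'e \<Rightarrow> real^'d::finite \<Rightarrow> real^'d \<Rightarrow> real"
    and m :: nat
  assumes stoch: "stochastic_matrix P"
    and p_sum: "\<And>k y. (\<Sum>u\<in>Vdirs. p k y u) = 1"
    and poisson: "\<And>i y. vfun P p i y = gfun p i y + Pop P (vfun P p) i y"
begin

lemma Pop_comp: "Pop P f i z $ c = (\<Sum>j\<in>UNIV. P i j * f j z $ c)"
  unfolding Pop_def by simp

lemma Pop_comp2: "Pop P f i z $ a $ b = (\<Sum>j\<in>UNIV. P i j * f j z $ a $ b)"
  unfolding Pop_def by simp

lemma poisson_comp: "(\<Sum>k\<in>UNIV. P i k * vfun P p k z $ c) = vfun P p i z $ c - gfun p i z $ c"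
  using arg_cong[OF poisson[of i z], of "\<lambda>x. x $ c"] by (simp add: Pop_comp)

lemma gfun_comp': "gfun p i y $ c = (\<Sum>u\<in>Vdirs. p i y u * u $ c)"
  unfolding gfun_def by simp

lemma bfun_comp: "bfun P p m i y $ c = (\<Sum>u\<in>Vdirs. p i y u *
      ((vfun P p i (y + inverse (real m) *\<^sub>R u) $ c - gfun p i (y + inverse (real m) *\<^sub>R u) $ c)
       - (vfun P p i y $ c - gfun p i y $ c)))"
  unfolding bfun_def by simp

lemma mean_eq:
  "(\<Sum>k\<in>UNIV. \<Sum>u\<in>Vdirs. P i k * p i y u * (u + vfun P p k (y + inverse (real m) *\<^sub>R u)) $ c)
     = (vfun P p i y + bfun P p m i y) $ c"
proof -
  let ?z = "\<lambda>u. y + inverse (real m) *\<^sub>R u"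
  let ?v = "\<lambda>k z. vfun P p k z $ c" and ?g = "\<lambda>k z. gfun p k z $ c"
  have "(\<Sum>k\<in>UNIV. \<Sum>u\<in>Vdirs. P i k * p i y u * (u + vfun P p k (?z u)) $ c)
      = (\<Sum>u\<in>Vdirs. \<Sum>k\<in>UNIV. P i k * p i y u * (u $ c + ?v k (?z u)))"
    by (subst sum.swap) simp
  also have "\<dots> = (\<Sum>u\<in>Vdirs. p i y u * (u $ c + (?v i (?z u) - ?g i (?z u))))"
  proof (rule sum.cong[OF refl])
    fix u
    have "(\<Sum>k\<in>UNIV. P i k * p i y u * (u $ c + ?v k (?z u)))
        = p i y u * (u $ c * (\<Sum>k\<in>UNIV. P i k) + (\<Sum>k\<in>UNIV. P i k * ?v k (?z u)))"
      by (simp add: sum_distrib_left sum_distrib_right sum.distrib algebra_simps)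
    then show "(\<Sum>k\<in>UNIV. P i k * p i y u * (u $ c + ?v k (?z u))) = p i y u * (u $ c + (?v i (?z u) - ?g i (?z u)))"
      by (simp add: P_sum[OF stoch] poisson_comp)
  qed
  also have "\<dots> = ?g i y + (\<Sum>u\<in>Vdirs. p i y u * (?v i (?z u) - ?g i (?z u)))"
    by (simp add: gfun_comp' distrib_left sum.distrib)
  also have "\<dots> = (vfun P p i y + bfun P p m i y) $ c"
  proof -
    have "bfun P p m i y $ c = (\<Sum>u\<in>Vdirs. p i y u * (?v i (?z u) - ?g i (?z u))) - (\<Sum>u\<in>Vdirs. p i y u) * (?v i y - ?g i y)"
      unfolding bfun_comp by (simp add: right_diff_distrib sum_subtractf sum_distrib_right)
    then show ?thesis by (simp add: p_sum)
  qed
  finally show ?thesis .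
qed

lemma second_eq:
  "(\<Sum>k\<in>UNIV. \<Sum>u\<in>Vdirs. P i k * p i y u *
      (((u + vfun P p k (y + inverse (real m) *\<^sub>R u)) $ a - (vfun P p i y + bfun P p m i y) $ a) *
       ((u + vfun P p k (y + inverse (real m) *\<^sub>R u)) $ b - (vfun P p i y + bfun P p m i y) $ b)))
     = afun P p m i y $ a $ b"
proof -
  let ?z = "\<lambda>u. y + inverse (real m) *\<^sub>R u"
  let ?W = "\<lambda>k u. u + vfun P p k (?z u)"
  let ?c = "vfun P p i y + bfun P p m i y"
  let ?w = "\<lambda>k u. P i k * p i y u"
  have w1: "(\<Sum>k\<in>UNIV. \<Sum>u\<in>Vdirs. ?w k u) = 1"
    by (simp add: sum_distrib_right[symmetric] sum_distrib_left[symmetric] p_sum P_sum[OF stoch])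
  have "(\<Sum>k\<in>UNIV. \<Sum>u\<in>Vdirs. ?w k u * ((?W k u $ a - ?c $ a) * (?W k u $ b - ?c $ b)))
      = (\<Sum>k\<in>UNIV. \<Sum>u\<in>Vdirs. ?w k u * (?W k u $ a * ?W k u $ b))
        - ?c $ a * (\<Sum>k\<in>UNIV. \<Sum>u\<in>Vdirs. ?w k u * ?W k u $ b)
        - ?c $ b * (\<Sum>k\<in>UNIV. \<Sum>u\<in>Vdirs. ?w k u * ?W k u $ a)
        + ?c $ a * ?c $ b * (\<Sum>k\<in>UNIV. \<Sum>u\<in>Vdirs. ?w k u)"
    by (simp add: sum_distrib_left sum.distrib sum_subtractf algebra_simps)
  also have "\<dots> = (\<Sum>k\<in>UNIV. \<Sum>u\<in>Vdirs. ?w k u * (?W k u $ a * ?W k u $ b)) - ?c $ a * ?c $ b"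
    using mean_eq[of i y a] mean_eq[of i y b] w1 by simp
  also have "(\<Sum>k\<in>UNIV. \<Sum>u\<in>Vdirs. ?w k u * (?W k u $ a * ?W k u $ b))
     = (\<Sum>u\<in>Vdirs. p i y u * (u $ a * u $ b + u $ a * Pop P (vfun P p) i (?z u) $ b
          + Pop P (vfun P p) i (?z u) $ a * u $ b
          + Pop P (\<lambda>j z. outer (vfun P p j z) (vfun P p j z)) i (?z u) $ a $ b))"
  proof -
    have "(\<Sum>k\<in>UNIV. \<Sum>u\<in>Vdirs. ?w k u * (?W k u $ a * ?W k u $ b))
        = (\<Sum>u\<in>Vdirs. \<Sum>k\<in>UNIV. ?w k u * (?W k u $ a * ?W k u $ b))" by (rule sum.swap)
    also have "\<dots> = (\<Sum>u\<in>Vdirs. p i y u * (u $ a * u $ b + u $ a * Pop P (vfun P p) i (?z u) $ b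
          + Pop P (vfun P p) i (?z u) $ a * u $ b
          + Pop P (\<lambda>j z. outer (vfun P p j z) (vfun P p j z)) i (?z u) $ a $ b))"
    proof (rule sum.cong[OF refl])
      fix u
      have "(\<Sum>k\<in>UNIV. ?w k u * (?W k u $ a * ?W k u $ b))
         = p i y u * (u $ a * u $ b * (\<Sum>k\<in>UNIV. P i k) + u $ a * (\<Sum>k\<in>UNIV. P i k * vfun P p k (?z u) $ b)
             + (\<Sum>k\<in>UNIV. P i k * vfun P p k (?z u) $ a) * u $ b
             + (\<Sum>k\<in>UNIV. P i k * (vfun P p k (?z u) $ a * vfun P p k (?z u) $ b)))"
        by (simp add: sum_distrib_left sum_distrib_right sum.distrib algebra_simps)
      then show "(\<Sum>k\<in>UNIV. ?w k u * (?W k u $ a * ?W k u $ b))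
         = p i y u * (u $ a * u $ b + u $ a * Pop P (vfun P p) i (?z u) $ b
          + Pop P (vfun P p) i (?z u) $ a * u $ b
          + Pop P (\<lambda>j z. outer (vfun P p j z) (vfun P p j z)) i (?z u) $ a $ b)"
        by (simp add: P_sum[OF stoch] Pop_comp Pop_comp2 outer_nth)
    qed
    finally show ?thesis .
  qed
  also have "(\<Sum>u\<in>Vdirs. p i y u * (u $ a * u $ b + u $ a * Pop P (vfun P p) i (?z u) $ b
          + Pop P (vfun P p) i (?z u) $ a * u $ b
          + Pop P (\<lambda>j z. outer (vfun P p j z) (vfun P p j z)) i (?z u) $ a $ b)) - ?c $ a * ?c $ b
      = afun P p m i y $ a $ b"
    unfolding afun_def alphafun_def by (simp add: outer_nth sum_distrib_left sum.distrib algebra_simps)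
  finally show ?thesis by (simp add: mult.assoc)
qed

end

definition goodf :: "'a measure \<Rightarrow> ('a \<Rightarrow> real) \<Rightarrow> bool" where
  "goodf M f \<longleftrightarrow> f \<in> borel_measurable M \<and> (\<exists>B. AE x in M. \<bar>f x\<bar> \<le> B)"

lemma goodf_add: "goodf M f \<Longrightarrow> goodf M g \<Longrightarrow> goodf M (\<lambda>x. f x + g x)"
  unfolding goodf_def
proof (elim conjE exE, intro conjI)
  fix B1 B2 assume "AE x in M. \<bar>f x\<bar> \<le> B1" "AE x in M. \<bar>g x\<bar> \<le> B2"
  then have "AE x in M. \<bar>f x + g x\<bar> \<le> B1 + B2" by eventually_elim auto
  then show "\<exists>B. AE x in M. \<bar>f x + g x\<bar> \<le> B" by blast
qed auto

lemma goodf_diff: "goodf M f \<Longrightarrow> goodf M g \<Longrightarrow> goodf M (\<lambda>x. f x - g x)"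
  unfolding goodf_def
proof (elim conjE exE, intro conjI)
  fix B1 B2 assume "AE x in M. \<bar>f x\<bar> \<le> B1" "AE x in M. \<bar>g x\<bar> \<le> B2"
  then have "AE x in M. \<bar>f x - g x\<bar> \<le> B1 + B2" by eventually_elim auto
  then show "\<exists>B. AE x in M. \<bar>f x - g x\<bar> \<le> B" by blast
qed auto

lemma goodf_mult: "goodf M f \<Longrightarrow> goodf M g \<Longrightarrow> goodf M (\<lambda>x. f x * g x)"
  unfolding goodf_def
proof (elim conjE exE, intro conjI)
  fix B1 B2 assume "AE x in M. \<bar>f x\<bar> \<le> B1" "AE x in M. \<bar>g x\<bar> \<le> B2"
  then have "AE x in M. \<bar>f x * g x\<bar> \<le> B1 * B2"
  proof eventually_elim
    case (elim x)
    then show ?case unfolding abs_mult by (intro mult_mono) auto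
  qed
  then show "\<exists>B. AE x in M. \<bar>f x * g x\<bar> \<le> B" by blast
qed auto

lemma goodf_ind: "A \<in> sets M \<Longrightarrow> goodf M f \<Longrightarrow> goodf M (\<lambda>x. indicator A x * f x)"
  by (rule goodf_mult) (auto simp: goodf_def intro!: exI[of _ 1] simp: indicator_def)

lemma goodf_bounded: "f \<in> borel_measurable M \<Longrightarrow> (\<And>x. x \<in> space M \<Longrightarrow> \<bar>f x\<bar> \<le> B) \<Longrightarrow> goodf M f"
  unfolding goodf_def by (auto intro!: exI[of _ B])

lemma goodf_AE: "goodf M g \<Longrightarrow> f \<in> borel_measurable M \<Longrightarrow> AE x in M. f x = g x \<Longrightarrow> goodf M f"
  unfolding goodf_def
proof (elim conjE exE, intro conjI)
  fix B assume "AE x in M. \<bar>g x\<bar> \<le> B" "AE x in M. f x = g x"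
  then have "AE x in M. \<bar>f x\<bar> \<le> B" by eventually_elim auto
  then show "\<exists>B. AE x in M. \<bar>f x\<bar> \<le> B" by blast
qed auto

lemma (in finite_measure) goodf_int: "goodf M f \<Longrightarrow> integrable M f"
  unfolding goodf_def using int_bound by blast

context mrw_ctx
begin

definition Z where "Z n \<omega> = J n \<omega> + vfun P p (\<xi> n \<omega>) (inverse (real m) *\<^sub>R S n \<omega>)"
abbreviation "Yp \<equiv> Yproc P p m M \<xi> J"
abbreviation "Mp \<equiv> Mproc P p m M \<xi> J"
definition CE where "CE n c = real_cond_exp M (F n) (\<lambda>\<omega>. Z (Suc n) \<omega> $ c)"
definition psi where "psi n c \<omega> = (vfun P p (\<xi> n \<omega>) (inverse (real m) *\<^sub>R S n \<omega>) + bfun P p m (\<xi> n \<omega>) (inverse (real m) *\<^sub>R S n \<omega>)) $ c"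

lemma measF: "f \<in> borel_measurable (F n) \<Longrightarrow> f \<in> borel_measurable M"
  by (rule measurable_from_subalg[OF subalg])

lemma measF_mono: "k \<le> n \<Longrightarrow> f \<in> borel_measurable (F k) \<Longrightarrow> f \<in> borel_measurable (F n)"
  by (rule measurable_from_subalg[OF subalg_F])

lemma setsF: "A \<in> sets (F n) \<Longrightarrow> A \<in> sets M" using F_sub by auto

lemma Z_meas: "(\<lambda>\<omega>. Z n \<omega> $ c) \<in> borel_measurable (F n)"
proof -
  obtain R where "disc (F n) (S n) R" using disc_S by blast
  then have "disc (F n) (\<lambda>\<omega>. (\<xi> n \<omega>, (S n \<omega>, J n \<omega>))) (UNIV \<times> (R \<times> Vdirs))"
    by (intro disc_pair disc_xi disc_J) auto
  from disc_meas[OF this, of "\<lambda>(i,s,u). (u + vfun P p i (inverse (real m) *\<^sub>R s)) $ c"]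
  show ?thesis unfolding Z_def by (simp add: add.commute)
qed

lemma Z_bound: "\<omega> \<in> space M \<Longrightarrow> \<bar>Z n \<omega> $ c\<bar> \<le> 1 + V"
proof -
  assume \<omega>: "\<omega> \<in> space M"
  have "\<bar>Z n \<omega> $ c\<bar> \<le> norm (Z n \<omega>)" by (rule component_le_norm_cart)
  also have "\<dots> \<le> norm (J n \<omega>) + norm (vfun P p (\<xi> n \<omega>) (inverse (real m) *\<^sub>R S n \<omega>))"
    unfolding Z_def by (rule norm_triangle_ineq)
  also have "\<dots> \<le> 1 + V" using Vdirs_norm[OF J_V[OF \<omega>]] vb by simp
  finally show ?thesis .
qed

lemma Z_bound2: "\<omega> \<in> space M \<Longrightarrow> Z n \<omega> $ c \<le> 1 + V \<and> - (1 + V) \<le> Z n \<omega> $ c"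
proof -
  assume "\<omega> \<in> space M"
  then have "\<bar>Z n \<omega> $ c\<bar> \<le> 1 + V" by (rule Z_bound)
  then show ?thesis by linarith
qed

lemma Z_good: "goodf M (\<lambda>\<omega>. Z n \<omega> $ c)"
  by (rule goodf_bounded[OF measF[OF Z_meas] Z_bound])

lemma Z_int: "integrable M (\<lambda>\<omega>. Z n \<omega> $ c)"
  by (rule goodf_int[OF Z_good])

lemma CE_meas: "CE n c \<in> borel_measurable (F n)"
  unfolding CE_def by (rule borel_measurable_cond_exp)

lemma CE_good: "goodf M (CE n c)"
proof -
  interpret s: sigma_finite_subalgebra M "F n" by (rule sfs)
  have "AE \<omega> in M. CE n c \<omega> \<le> 1 + V" unfolding CE_def
    by (rule s.real_cond_exp_le_c[OF Z_int]) (auto intro!: AE_I2 dest: Z_bound2)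
  moreover have "AE \<omega> in M. CE n c \<omega> \<ge> - (1 + V)" unfolding CE_def
    by (rule s.real_cond_exp_ge_c[OF Z_int]) (auto intro!: AE_I2 dest: Z_bound2)
  ultimately have "AE \<omega> in M. \<bar>CE n c \<omega>\<bar> \<le> 1 + V" by eventually_elim auto
  then show ?thesis unfolding goodf_def using measF[OF CE_meas] by blast
qed

lemma CE_intA: "A \<in> sets (F n) \<Longrightarrow> (\<integral>\<omega>. indicator A \<omega> * CE n c \<omega> \<partial>M) = (\<integral>\<omega>. indicator A \<omega> * Z (Suc n) \<omega> $ c \<partial>M)"
proof -
  assume A: "A \<in> sets (F n)"
  interpret s: sigma_finite_subalgebra M "F n" by (rule sfs)
  show ?thesis using s.real_cond_exp_intA[OF Z_int A, of "Suc n" c]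
    unfolding CE_def set_lebesgue_integral_def by simp
qed

lemma CE_intg: "f \<in> borel_measurable (F n) \<Longrightarrow> goodf M f \<Longrightarrow>
   (\<integral>\<omega>. f \<omega> * CE n c \<omega> \<partial>M) = (\<integral>\<omega>. f \<omega> * Z (Suc n) \<omega> $ c \<partial>M)"
proof -
  assume f: "f \<in> borel_measurable (F n)" "goodf M f"
  interpret s: sigma_finite_subalgebra M "F n" by (rule sfs)
  show ?thesis unfolding CE_def
    by (rule s.real_cond_exp_intg(2)[OF goodf_int[OF goodf_mult[OF f(2) Z_good]] f(1) measF[OF Z_meas]])
qed

lemma psi_meas: "psi n c \<in> borel_measurable (F n)"
  unfolding psi_def by (rule disc_fun_meas) simp

lemma psi_good: "goodf M (psi n c)"
proof -
  obtain R where R: "disc (F n) (\<lambda>\<omega>. (\<xi> n \<omega>, S n \<omega>)) R" using disc_D by blast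
  obtain B where "\<forall>\<omega>\<in>space (F n). norm ((\<lambda>(i,s). (vfun P p i (inverse (real m) *\<^sub>R s) + bfun P p m i (inverse (real m) *\<^sub>R s)) $ c) (\<xi> n \<omega>, S n \<omega>)) \<le> B"
    using disc_bounded[OF R] by blast
  then have "\<And>\<omega>. \<omega> \<in> space M \<Longrightarrow> \<bar>psi n c \<omega>\<bar> \<le> B" unfolding psi_def space_F by auto
  then show ?thesis by (rule goodf_bounded[OF measF[OF psi_meas]])
qed

lemma Z_Suc: "Z (Suc n) \<omega> $ c = (J (Suc n) \<omega> + vfun P p (\<xi> (Suc n) \<omega>)
      (inverse (real m) *\<^sub>R S n \<omega> + inverse (real m) *\<^sub>R J (Suc n) \<omega>)) $ c"
  unfolding Z_def S_Suc by (simp add: scaleR_right_distrib)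

lemma CE_explicit: "AE \<omega> in M. CE n c \<omega> = psi n c \<omega>"
proof -
  interpret s: sigma_finite_subalgebra M "F n" by (rule sfs)
  show ?thesis unfolding CE_def
  proof (rule s.real_cond_exp_charact)
    fix A assume A: "A \<in> sets (F n)"
    let ?\<Phi> = "\<lambda>i s k u. (u + vfun P p k (inverse (real m) *\<^sub>R s + inverse (real m) *\<^sub>R u)) $ c"
    have "(\<integral>\<omega>. indicator A \<omega> * Z (Suc n) \<omega> $ c \<partial>M) = (\<integral>\<omega>. indicator A \<omega> * ?\<Phi> (\<xi> n \<omega>) (S n \<omega>) (\<xi> (Suc n) \<omega>) (J (Suc n) \<omega>) \<partial>M)"
      unfolding Z_Suc ..
    also have "\<dots> = (\<integral>\<omega>. indicator A \<omega> * (\<Sum>k\<in>UNIV. \<Sum>u\<in>Vdirs. P (\<xi> n \<omega>) k * p (\<xi> n \<omega>) (inverse (real m) *\<^sub>R S n \<omega>) u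
              * ?\<Phi> (\<xi> n \<omega>) (S n \<omega>) k u) \<partial>M)"
      by (rule step[OF A])
    also have "\<dots> = (\<integral>\<omega>. indicator A \<omega> * psi n c \<omega> \<partial>M)"
      unfolding psi_def using mean_eq[OF stoch p_sum poisson] by simp
    finally show "(\<integral>\<omega>\<in>A. Z (Suc n) \<omega> $ c \<partial>M) = (\<integral>\<omega>\<in>A. psi n c \<omega> \<partial>M)"
      unfolding set_lebesgue_integral_def by simp
  qed (auto intro: Z_int goodf_int[OF psi_good] psi_meas)
qed

end

lemma norm_sq_vec: "(norm (x::real^'n::finite))\<^sup>2 = (\<Sum>i\<in>UNIV. x $ i * x $ i)"
  unfolding power2_norm_eq_inner inner_vec_def by simp

lemma goodf_const: "goodf M (\<lambda>x. c)"
  unfolding goodf_def by (auto intro!: exI[of _ "\<bar>c\<bar>"])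

context mrw_ctx
begin

lemma Y_Suc: "Yp (Suc n) \<omega> $ c = Z (Suc n) \<omega> $ c - CE n c \<omega>"
  unfolding Yproc_def CE_def Z_def Let_def by simp

lemma Y_meas: "1 \<le> k \<Longrightarrow> k \<le> n \<Longrightarrow> (\<lambda>\<omega>. Yp k \<omega> $ c) \<in> borel_measurable (F n)"
proof -
  assume k: "1 \<le> k" "k \<le> n"
  then obtain j where j: "k = Suc j" by (cases k) auto
  have "(\<lambda>\<omega>. Z (Suc j) \<omega> $ c - CE j c \<omega>) \<in> borel_measurable (F (Suc j))"
    using Z_meas measF_mono[OF _ CE_meas, of j "Suc j"] by measurable
  then have "(\<lambda>\<omega>. Yp k \<omega> $ c) \<in> borel_measurable (F k)" unfolding j Y_Suc .
  then show ?thesis by (rule measF_mono[OF k(2)])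
qed

lemma Y_good: "goodf M (\<lambda>\<omega>. Yp (Suc n) \<omega> $ c)"
  unfolding Y_Suc by (rule goodf_diff[OF Z_good CE_good])

lemma Mp_0: "Mp 0 \<omega> = 0" unfolding Mproc_def by simp
lemma Mp_Suc: "Mp (Suc n) \<omega> $ c = Mp n \<omega> $ c + Yp (Suc n) \<omega> $ c"
  unfolding Mproc_def by simp

lemma Mp_meas: "(\<lambda>\<omega>. Mp n \<omega> $ c) \<in> borel_measurable (F n)"
proof (induction n)
  case 0 then show ?case by (simp add: Mp_0)
next
  case (Suc n)
  have "(\<lambda>\<omega>. Mp n \<omega> $ c) \<in> borel_measurable (F (Suc n))" by (rule measF_mono[OF _ Suc]) simp
  moreover have "(\<lambda>\<omega>. Yp (Suc n) \<omega> $ c) \<in> borel_measurable (F (Suc n))" by (rule Y_meas) auto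
  ultimately show ?case unfolding Mp_Suc by measurable
qed

lemma Mp_good: "goodf M (\<lambda>\<omega>. Mp n \<omega> $ c)"
proof (induction n)
  case 0 then show ?case using goodf_const[of M 0] by (simp add: Mp_0)
next
  case (Suc n) then show ?case unfolding Mp_Suc by (rule goodf_add[OF _ Y_good])
qed

lemma ind_meas: "A \<in> sets (F n) \<Longrightarrow> (\<lambda>\<omega>. indicator A \<omega> :: real) \<in> borel_measurable (F n)"
  by simp

lemma Mp_mart: "AE \<omega> in M. real_cond_exp M (F n) (\<lambda>\<omega>. Mp (Suc n) \<omega> $ c) \<omega> = Mp n \<omega> $ c"
proof -
  interpret s: sigma_finite_subalgebra M "F n" by (rule sfs)
  show ?thesis
  proof (rule s.real_cond_exp_charact)
    fix A assume A: "A \<in> sets (F n)"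
    have AM: "A \<in> sets M" by (rule setsF[OF A])
    have i1: "integrable M (\<lambda>\<omega>. indicator A \<omega> * Mp n \<omega> $ c)" by (rule goodf_int[OF goodf_ind[OF AM Mp_good]])
    have i2: "integrable M (\<lambda>\<omega>. indicator A \<omega> * Z (Suc n) \<omega> $ c)" by (rule goodf_int[OF goodf_ind[OF AM Z_good]])
    have i3: "integrable M (\<lambda>\<omega>. indicator A \<omega> * CE n c \<omega>)" by (rule goodf_int[OF goodf_ind[OF AM CE_good]])
    have "(\<lambda>\<omega>. indicator A \<omega> * Mp (Suc n) \<omega> $ c) = (\<lambda>\<omega>. indicator A \<omega> * Mp n \<omega> $ c +
          (indicator A \<omega> * Z (Suc n) \<omega> $ c - indicator A \<omega> * CE n c \<omega>))"
      by (rule ext) (simp add: Mp_Suc Y_Suc algebra_simps)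
    then have "(\<integral>\<omega>. indicator A \<omega> * Mp (Suc n) \<omega> $ c \<partial>M) = (\<integral>\<omega>. indicator A \<omega> * Mp n \<omega> $ c \<partial>M) +
          ((\<integral>\<omega>. indicator A \<omega> * Z (Suc n) \<omega> $ c \<partial>M) - (\<integral>\<omega>. indicator A \<omega> * CE n c \<omega> \<partial>M))"
      using i1 i2 i3 by simp
    also have "\<dots> = (\<integral>\<omega>. indicator A \<omega> * Mp n \<omega> $ c \<partial>M)" using CE_intA[OF A] by simp
    finally show "(\<integral>\<omega>\<in>A. Mp (Suc n) \<omega> $ c \<partial>M) = (\<integral>\<omega>\<in>A. Mp n \<omega> $ c \<partial>M)"
      unfolding set_lebesgue_integral_def by simp
  qed (auto intro: goodf_int[OF Mp_good] Mp_meas)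
qed

lemma Mp_sq: "sq_integrable_martingale M F Mp"
  unfolding sq_integrable_martingale_def vec_martingale_def real_martingale_def
proof (intro conjI allI)
  fix n
  have "goodf M (\<lambda>\<omega>. \<Sum>i\<in>UNIV. Mp n \<omega> $ i * Mp n \<omega> $ i)"
  proof -
    have "goodf M (\<lambda>\<omega>. \<Sum>i\<in>I. Mp n \<omega> $ i * Mp n \<omega> $ i)" if "finite I" for I :: "'d set"
      using that
    proof (induction I rule: finite_induct)
      case empty then show ?case using goodf_const[of M 0] by simp
    next
      case (insert x F) then show ?case by (simp add: goodf_add goodf_mult Mp_good)
    qed
    then show ?thesis by simp
  qed
  then show "integrable M (\<lambda>\<omega>. (norm (Mp n \<omega>))\<^sup>2)" unfolding norm_sq_vec by (rule goodf_int)
qed (auto intro: goodf_int[OF Mp_good] Mp_meas Mp_mart)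

end

lemma my_norm_nth: "norm ((x::'a::real_normed_vector^'n::finite) $ i) \<le> norm x"
  unfolding norm_vec_def by (rule member_le_L2_set) simp_all

context mrw_ctx
begin

definition abr where "abr n \<omega> = (\<Sum>k\<in>{1..n}. afun P p m (\<xi> (k - 1) \<omega>) (inverse (real m) *\<^sub>R S (k - 1) \<omega>))"

lemma abr_0: "abr 0 \<omega> = 0" unfolding abr_def by simp
lemma abr_Suc: "abr (Suc n) \<omega> $ a $ b = abr n \<omega> $ a $ b + afun P p m (\<xi> n \<omega>) (inverse (real m) *\<^sub>R S n \<omega>) $ a $ b"
  unfolding abr_def by simp

lemma abr_comp: "abr n \<omega> $ a $ b = (\<Sum>k\<in>{1..n}. afun P p m (\<xi> (k - 1) \<omega>) (inverse (real m) *\<^sub>R S (k - 1) \<omega>) $ a $ b)"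
  unfolding abr_def by simp

lemma afc_bound:
  obtains C where "\<And>i y. \<bar>afun P p m i y $ a $ b\<bar> \<le> C"
proof -
  obtain C where C: "\<And>m i y. norm (afun P p m i y) \<le> C"
    using afun_bounded[OF stoch p_nonneg p_sum vb] by blast
  have "\<bar>afun P p m i y $ a $ b\<bar> \<le> C" for i y
  proof -
    have "\<bar>afun P p m i y $ a $ b\<bar> \<le> norm (afun P p m i y $ a)" by (rule component_le_norm_cart)
    also have "\<dots> \<le> norm (afun P p m i y)" by (rule my_norm_nth)
    finally show ?thesis using C[of m i y] by linarith
  qed
  then show ?thesis using that by blast
qed

lemma af_meas: "k \<le> n \<Longrightarrow> (\<lambda>\<omega>. afun P p m (\<xi> k \<omega>) (inverse (real m) *\<^sub>R S k \<omega>) $ a $ b) \<in> borel_measurable (F n)"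
  by (rule disc_fun_meas[where h="\<lambda>i s. afun P p m i (inverse (real m) *\<^sub>R s) $ a $ b"])

lemma af_good: "goodf M (\<lambda>\<omega>. afun P p m (\<xi> n \<omega>) (inverse (real m) *\<^sub>R S n \<omega>) $ a $ b)"
proof -
  obtain C where "\<And>i y. \<bar>afun P p m i y $ a $ b\<bar> \<le> C" using afc_bound by blast
  then show ?thesis by (intro goodf_bounded[OF measF[OF af_meas[OF le_refl]]])
qed

lemma abr_meas: "n \<le> Suc n' \<Longrightarrow> (\<lambda>\<omega>. abr n \<omega> $ a $ b) \<in> borel_measurable (F n')"
  unfolding abr_comp by (intro borel_measurable_sum af_meas) auto

lemma abr_good: "goodf M (\<lambda>\<omega>. abr n \<omega> $ a $ b)"
proof (induction n)
  case 0 then show ?case using goodf_const[of M 0] by (simp add: abr_0)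
next
  case (Suc n) then show ?case unfolding abr_Suc by (rule goodf_add[OF _ af_good])
qed

definition Q where "Q a b n \<omega> = Mp n \<omega> $ a * Mp n \<omega> $ b - abr n \<omega> $ a $ b"

lemma Q_eq: "(outer (Mp n \<omega>) (Mp n \<omega>) - abr n \<omega>) $ a $ b = Q a b n \<omega>"
  unfolding Q_def by (simp add: outer_nth)

lemma Q_meas: "Q a b n \<in> borel_measurable (F n)"
  unfolding Q_def using Mp_meas abr_meas[of n n] by measurable

lemma Q_good: "goodf M (Q a b n)"
  unfolding Q_def by (intro goodf_diff goodf_mult Mp_good abr_good)

lemma Y_explicit: "AE \<omega> in M. Yp (Suc n) \<omega> $ c = Z (Suc n) \<omega> $ c - psi n c \<omega>"
  using CE_explicit[of n c] by eventually_elim (simp add: Y_Suc)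

lemma YY_int: "A \<in> sets (F n) \<Longrightarrow>
  (\<integral>\<omega>. indicator A \<omega> * (Yp (Suc n) \<omega> $ a * Yp (Suc n) \<omega> $ b) \<partial>M)
   = (\<integral>\<omega>. indicator A \<omega> * afun P p m (\<xi> n \<omega>) (inverse (real m) *\<^sub>R S n \<omega>) $ a $ b \<partial>M)"
proof -
  assume A: "A \<in> sets (F n)"
  have AM: "A \<in> sets M" by (rule setsF[OF A])
  let ?\<Phi> = "\<lambda>i s k u. ((u + vfun P p k (inverse (real m) *\<^sub>R s + inverse (real m) *\<^sub>R u)) $ a
                 - (vfun P p i (inverse (real m) *\<^sub>R s) + bfun P p m i (inverse (real m) *\<^sub>R s)) $ a) *
              ((u + vfun P p k (inverse (real m) *\<^sub>R s + inverse (real m) *\<^sub>R u)) $ b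
                 - (vfun P p i (inverse (real m) *\<^sub>R s) + bfun P p m i (inverse (real m) *\<^sub>R s)) $ b)"
  have m1: "(\<lambda>\<omega>. Yp (Suc n) \<omega> $ c) \<in> borel_measurable M" for c by (rule measF[OF Y_meas]) auto
  have m2: "(\<lambda>\<omega>. Z (Suc n) \<omega> $ c) \<in> borel_measurable M" for c by (rule measF[OF Z_meas])
  have m3: "psi n c \<in> borel_measurable M" for c by (rule measF[OF psi_meas])
  have "(\<integral>\<omega>. indicator A \<omega> * (Yp (Suc n) \<omega> $ a * Yp (Suc n) \<omega> $ b) \<partial>M)
      = (\<integral>\<omega>. indicator A \<omega> * ((Z (Suc n) \<omega> $ a - psi n a \<omega>) * (Z (Suc n) \<omega> $ b - psi n b \<omega>)) \<partial>M)"
  proof (rule integral_cong_AE)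
    show "AE \<omega> in M. indicator A \<omega> * (Yp (Suc n) \<omega> $ a * Yp (Suc n) \<omega> $ b) =
        indicator A \<omega> * ((Z (Suc n) \<omega> $ a - psi n a \<omega>) * (Z (Suc n) \<omega> $ b - psi n b \<omega>))"
      using Y_explicit[of n a] Y_explicit[of n b] by eventually_elim simp
  qed (use AM m1 m2 m3 in measurable)
  also have "\<dots> = (\<integral>\<omega>. indicator A \<omega> * ?\<Phi> (\<xi> n \<omega>) (S n \<omega>) (\<xi> (Suc n) \<omega>) (J (Suc n) \<omega>) \<partial>M)"
    unfolding Z_Suc psi_def ..
  also have "\<dots> = (\<integral>\<omega>. indicator A \<omega> * (\<Sum>k\<in>UNIV. \<Sum>u\<in>Vdirs. P (\<xi> n \<omega>) k * p (\<xi> n \<omega>) (inverse (real m) *\<^sub>R S n \<omega>) u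
              * ?\<Phi> (\<xi> n \<omega>) (S n \<omega>) k u) \<partial>M)"
    by (rule step[OF A])
  also have "\<dots> = (\<integral>\<omega>. indicator A \<omega> * afun P p m (\<xi> n \<omega>) (inverse (real m) *\<^sub>R S n \<omega>) $ a $ b \<partial>M)"
    using second_eq[OF stoch p_sum poisson] by simp
  finally show ?thesis .
qed

lemma Q_mart: "AE \<omega> in M. real_cond_exp M (F n) (Q a b (Suc n)) \<omega> = Q a b n \<omega>"
proof -
  interpret s: sigma_finite_subalgebra M "F n" by (rule sfs)
  show ?thesis
  proof (rule s.real_cond_exp_charact)
    fix A assume A: "A \<in> sets (F n)"
    have AM: "A \<in> sets M" by (rule setsF[OF A])
    let ?i = "\<lambda>\<omega>. indicator A \<omega> :: real"
    let ?Ma = "\<lambda>\<omega>. Mp n \<omega> $ a" and ?Mb = "\<lambda>\<omega>. Mp n \<omega> $ b"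
    let ?Za = "\<lambda>\<omega>. Z (Suc n) \<omega> $ a" and ?Zb = "\<lambda>\<omega>. Z (Suc n) \<omega> $ b"
    let ?Ya = "\<lambda>\<omega>. Yp (Suc n) \<omega> $ a" and ?Yb = "\<lambda>\<omega>. Yp (Suc n) \<omega> $ b"
    let ?af = "\<lambda>\<omega>. afun P p m (\<xi> n \<omega>) (inverse (real m) *\<^sub>R S n \<omega>) $ a $ b"
    have gMa: "goodf M (\<lambda>\<omega>. ?i \<omega> * ?Ma \<omega>)" "goodf M (\<lambda>\<omega>. ?i \<omega> * ?Mb \<omega>)"
      by (intro goodf_ind[OF AM] Mp_good)+
    have fMa: "(\<lambda>\<omega>. ?i \<omega> * ?Ma \<omega>) \<in> borel_measurable (F n)" "(\<lambda>\<omega>. ?i \<omega> * ?Mb \<omega>) \<in> borel_measurable (F n)"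
      using Mp_meas[of n a] Mp_meas[of n b] A by measurable
    have i1: "integrable M (\<lambda>\<omega>. ?i \<omega> * Q a b n \<omega>)" by (intro goodf_int goodf_ind[OF AM] Q_good)
    have i2: "integrable M (\<lambda>\<omega>. (?i \<omega> * ?Ma \<omega>) * ?Zb \<omega>)" by (intro goodf_int goodf_mult gMa Z_good)
    have i3: "integrable M (\<lambda>\<omega>. (?i \<omega> * ?Ma \<omega>) * CE n b \<omega>)" by (intro goodf_int goodf_mult gMa CE_good)
    have i4: "integrable M (\<lambda>\<omega>. (?i \<omega> * ?Mb \<omega>) * ?Za \<omega>)" by (intro goodf_int goodf_mult gMa Z_good)
    have i5: "integrable M (\<lambda>\<omega>. (?i \<omega> * ?Mb \<omega>) * CE n a \<omega>)" by (intro goodf_int goodf_mult gMa CE_good)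
    have i6: "integrable M (\<lambda>\<omega>. ?i \<omega> * (?Ya \<omega> * ?Yb \<omega>))" by (intro goodf_int goodf_ind[OF AM] goodf_mult Y_good)
    have i7: "integrable M (\<lambda>\<omega>. ?i \<omega> * ?af \<omega>)" by (intro goodf_int goodf_ind[OF AM] af_good)
    have "(\<lambda>\<omega>. ?i \<omega> * Q a b (Suc n) \<omega>) = (\<lambda>\<omega>. ?i \<omega> * Q a b n \<omega>
         + (((?i \<omega> * ?Ma \<omega>) * ?Zb \<omega> - (?i \<omega> * ?Ma \<omega>) * CE n b \<omega>)
         + (((?i \<omega> * ?Mb \<omega>) * ?Za \<omega> - (?i \<omega> * ?Mb \<omega>) * CE n a \<omega>)
         + (?i \<omega> * (?Ya \<omega> * ?Yb \<omega>) - ?i \<omega> * ?af \<omega>))))"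
      by (rule ext) (simp add: Q_def Mp_Suc abr_Suc Y_Suc algebra_simps)
    then have "(\<integral>\<omega>. ?i \<omega> * Q a b (Suc n) \<omega> \<partial>M) = (\<integral>\<omega>. ?i \<omega> * Q a b n \<omega> \<partial>M)
         + (((\<integral>\<omega>. (?i \<omega> * ?Ma \<omega>) * ?Zb \<omega> \<partial>M) - (\<integral>\<omega>. (?i \<omega> * ?Ma \<omega>) * CE n b \<omega> \<partial>M))
         + (((\<integral>\<omega>. (?i \<omega> * ?Mb \<omega>) * ?Za \<omega> \<partial>M) - (\<integral>\<omega>. (?i \<omega> * ?Mb \<omega>) * CE n a \<omega> \<partial>M))
         + ((\<integral>\<omega>. ?i \<omega> * (?Ya \<omega> * ?Yb \<omega>) \<partial>M) - (\<integral>\<omega>. ?i \<omega> * ?af \<omega> \<partial>M))))"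
      using i1 i2 i3 i4 i5 i6 i7 by simp
    also have "\<dots> = (\<integral>\<omega>. ?i \<omega> * Q a b n \<omega> \<partial>M)"
      using CE_intg[OF fMa(1) gMa(1), of b] CE_intg[OF fMa(2) gMa(2), of a] YY_int[OF A] by simp
    finally show "(\<integral>\<omega>\<in>A. Q a b (Suc n) \<omega> \<partial>M) = (\<integral>\<omega>\<in>A. Q a b n \<omega> \<partial>M)"
      unfolding set_lebesgue_integral_def by simp
  qed (auto intro: goodf_int[OF Q_good] Q_meas)
qed

lemma bracket: "is_bracket M F Mp abr"
  unfolding is_bracket_def real_martingale_def Q_eq
proof (intro conjI allI ballI)
  fix n a b
  show "(\<lambda>\<omega>. abr (Suc n) \<omega> $ a $ b) \<in> borel_measurable (F n)" by (rule abr_meas) simp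
  show "(\<lambda>\<omega>. Q a b n \<omega>) \<in> borel_measurable (F n)" using Q_meas by simp
  show "integrable M (\<lambda>\<omega>. Q a b n \<omega>)" using goodf_int[OF Q_good] by simp
  show "AE \<omega> in M. real_cond_exp M (F n) (\<lambda>\<omega>. Q a b (Suc n) \<omega>) \<omega> = Q a b n \<omega>" using Q_mart by simp
qed (simp add: abr_0)

end

theorem proposition4p3:
  fixes P :: "'e::finite \<Rightarrow> 'e \<Rightarrow> real"
    and \<mu> :: "'e \<Rightarrow> real"
    and p :: "'e \<Rightarrow> real^'d::finite \<Rightarrow> real^'d \<Rightarrow> real"
  assumes stoch: "stochastic_matrix P"
    and irred: "irreducible_matrix P"
    and aper: "aperiodic_matrix P"
    and inv: "invariant_probability P \<mu>"
    and inv_unique: "\<And>\<nu>. invariant_probability P \<nu> \<Longrightarrow> \<nu> = \<mu>"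
    and p_nonneg: "\<And>k y u. u \<in> Vdirs \<Longrightarrow> 0 \<le> p k y u"
    and p_sum: "\<And>k y. (\<Sum>u\<in>Vdirs. p k y u) = 1"
    and p_C2: "\<And>k u. u \<in> Vdirs \<Longrightarrow>
       \<exists>(D1 :: real^'d \<Rightarrow> ((real^'d) \<Rightarrow>\<^sub>L real)) (D2 :: real^'d \<Rightarrow> ((real^'d) \<Rightarrow>\<^sub>L ((real^'d) \<Rightarrow>\<^sub>L real))).
          (\<forall>y. ((\<lambda>z. p k z u) has_derivative blinfun_apply (D1 y)) (at y))
        \<and> (\<forall>y. (D1 has_derivative blinfun_apply (D2 y)) (at y))
        \<and> continuous_on UNIV D2 \<and> bounded (range D1) \<and> bounded (range D2)"
    and centered: "\<And>y. (\<Sum>k\<in>UNIV. \<mu> k *\<^sub>R gfun p k y) = 0"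
  shows "(\<forall>m (M :: 'a measure) \<xi> J. 1 \<le> m \<and> mrw P p m M \<xi> J \<longrightarrow>
             sq_integrable_martingale M (filt M \<xi> J) (Mproc P p m M \<xi> J)
           \<and> is_bracket M (filt M \<xi> J) (Mproc P p m M \<xi> J)
               (\<lambda>n \<omega>. \<Sum>k\<in>{1..n}. afun P p m (\<xi> (k - 1) \<omega>)
                                     (inverse (real m) *\<^sub>R Sproc J (k - 1) \<omega>)))
       \<and> (\<exists>C. \<forall>m \<ge> 1. \<forall>i y. norm (afun P p m i y) \<le> C)"
proof -
  obtain V where vb: "\<And>i y. norm (vfun P p i y) \<le> V"
    using vfun_bounded[OF stoch irred aper inv p_nonneg p_sum centered] by blast
  have pois: "\<And>i y. vfun P p i y = gfun p i y + Pop P (vfun P p) i y"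
    by (rule poisson[OF stoch irred aper inv p_nonneg p_sum centered])
  have part1: "\<forall>m (M :: 'a measure) \<xi> J. 1 \<le> m \<and> mrw P p m M \<xi> J \<longrightarrow>
             sq_integrable_martingale M (filt M \<xi> J) (Mproc P p m M \<xi> J)
           \<and> is_bracket M (filt M \<xi> J) (Mproc P p m M \<xi> J)
               (\<lambda>n \<omega>. \<Sum>k\<in>{1..n}. afun P p m (\<xi> (k - 1) \<omega>)
                                     (inverse (real m) *\<^sub>R Sproc J (k - 1) \<omega>))"
  proof (intro allI impI)
    fix m and M :: "'a measure" and \<xi> J
    assume "1 \<le> m \<and> mrw P p m M \<xi> J"
    then have mrw: "mrw P p m M \<xi> J" by blast
    interpret c: mrw_ctx P p m M \<xi> J V
      by (rule mrw_ctx.intro[OF stoch p_nonneg p_sum vb pois mrw])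
    have e: "(\<lambda>n \<omega>. \<Sum>k\<in>{1..n}. afun P p m (\<xi> (k - 1) \<omega>) (inverse (real m) *\<^sub>R Sproc J (k - 1) \<omega>)) = c.abr"
      by (intro ext) (simp add: c.abr_def)
    show "sq_integrable_martingale M (filt M \<xi> J) (Mproc P p m M \<xi> J)
           \<and> is_bracket M (filt M \<xi> J) (Mproc P p m M \<xi> J)
               (\<lambda>n \<omega>. \<Sum>k\<in>{1..n}. afun P p m (\<xi> (k - 1) \<omega>)
                                     (inverse (real m) *\<^sub>R Sproc J (k - 1) \<omega>))"
      unfolding e using c.Mp_sq c.bracket by blast
  qed
  moreover have "\<exists>C. \<forall>m \<ge> 1. \<forall>i y. norm (afun P p m i y) \<le> C"
    using afun_bounded[OF stoch p_nonneg p_sum vb] by blast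
  ultimately show ?thesis by blast
qed

end
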